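(* Let $(D,V)$ be an admissible pair, let $L$ be the backward shift $Lg(z)=\frac{g(z)-g(0)}{z}$ on $\mathcal{W}H$, and let $M_z$ be multiplication by $z$ on $\mathcal{W}H$ with maximal domain $\mathscr{D}(M_z)=\{f\in\mathcal{W}H: zf\in\mathcal{W}H\}$. Then: (i) $\mathcal{W}V^*\mathcal{W}^{-1}=L$; (ii) if $x\in\mathscr{D}(D^* )$ then $\mathcal{W}x\in\mathscr{D}(M_z)$ and $\mathcal{W}D^*x=M_z\mathcal{W}x$; (iii) $M_z$ is a closed symmetric operator and $(M_z-\lambda I)\mathscr{D}(M_z)=\{f\in\mathcal{W}H: f(\lambda)=0\}$ for every $\lambda\in\mathbb{C}$.
   Context: Let $H$ be a separable complex Hilbert space. A pair $(D,V)$ of operators is called admissible if: (i) $D:\mathscr{D}(D)\subset H\to H$ is a densely defined closed linear operator; (ii) $\dim\ker D=1$; (iii) $D$ has a self-adjoint restriction with compact resolvent; (iv) $V:H\to H$ is a compact operator with $\sigma(V)=\{0\}$; (v) $\operatorname{Ran}V\subset\mathscr{D}(D)$ and $DV=I$. Fix $0\neq\phi_0\in\ker D$ and put $\phi_\lambda=(I-\lambda V)^{-1}\phi_0$ for $\lambda\in\mathbb{C}$ (then $\phi_\lambda$ spans $\ker(D-\lambda I)$). The generalized Fourier transform is $(\mathcal{W}x)(\lambda)=\langle x,\phi_{\bar\lambda}\rangle_H$ for $x\in H$, $\lambda\in\mathbb{C}$; each $\mathcal{W}x$ is entire, $\mathcal{W}$ is injective, and $\mathcal{W}H$ is regarded as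 a Hilbert space of entire functions with norm $\|\mathcal{W}x\|:=\|x\|_H$, so that $\mathcal{W}:H\to\mathcal{W}H$ is unitary. *)

theory Defs
  imports "HOL-Analysis.Analysis" "HOL-Library.Function_Algebras"
begin

class scaleC = scaleR +
  fixes scaleC :: "complex \<Rightarrow> 'a \<Rightarrow> 'a" (infixr \<open>*\<^sub>C\<close> 75)
  assumes scaleR_scaleC: "scaleR r = scaleC (complex_of_real r)"

class complex_vector = scaleC + real_vector +
  assumes scaleC_add_right: "a *\<^sub>C (x + y) = a *\<^sub>C x + a *\<^sub>C y"
    and scaleC_add_left: "(a + b) *\<^sub>C x = a *\<^sub>C x + b *\<^sub>C x"
    and scaleC_scaleC: "a *\<^sub>C b *\<^sub>C x = (a * b) *\<^sub>C x"
    and scaleC_one: "1 *\<^sub>C x = x"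

class complex_inner = complex_vector + real_normed_vector +
  fixes cinner :: "'a \<Rightarrow> 'a \<Rightarrow> complex"
  assumes cinner_commute: "cinner x y = cnj (cinner y x)"
    and cinner_add_left: "cinner (x + y) z = cinner x z + cinner y z"
    and cinner_scaleC_left: "cinner (a *\<^sub>C x) y = a * cinner x y"
    and cinner_nonneg: "0 \<le> Re (cinner x x)"
    and cinner_eq_zero_iff: "cinner x x = 0 \<longleftrightarrow> x = 0"
    and norm_eq_sqrt_cinner: "norm x = sqrt (Re (cinner x x))"

class chilbert = complex_inner + complete_space

definition separable_space :: "'a::topological_space itself \<Rightarrow> bool" where
  "separable_space _ \<longleftrightarrow> (\<exists>C::'a set. countable C \<and> closure C = UNIV)"

definition csubspace :: "'a::complex_vector set \<Rightarrow> bool" where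
  "csubspace S \<longleftrightarrow> 0 \<in> S \<and> (\<forall>x\<in>S. \<forall>y\<in>S. x + y \<in> S) \<and> (\<forall>c x. x \<in> S \<longrightarrow> c *\<^sub>C x \<in> S)"

definition clinear_on :: "'a::complex_vector set \<Rightarrow> ('a \<Rightarrow> 'b::complex_vector) \<Rightarrow> bool" where
  "clinear_on S T \<longleftrightarrow> csubspace S \<and>
     (\<forall>x\<in>S. \<forall>y\<in>S. T (x + y) = T x + T y) \<and> (\<forall>c. \<forall>x\<in>S. T (c *\<^sub>C x) = c *\<^sub>C T x)"

definition bounded_clinear_op :: "('a::complex_inner \<Rightarrow> 'b::complex_inner) \<Rightarrow> bool" where
  "bounded_clinear_op T \<longleftrightarrow> clinear_on UNIV T \<and> (\<exists>K. \<forall>x. norm (T x) \<le> K * norm x)"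

definition compact_op :: "('a::complex_inner \<Rightarrow> 'b::complex_inner) \<Rightarrow> bool" where
  "compact_op T \<longleftrightarrow> bounded_clinear_op T \<and> compact (closure (T ` ball 0 1))"

definition bspectrum :: "('a::complex_inner \<Rightarrow> 'a) \<Rightarrow> complex set" where
  "bspectrum T = {\<mu>. \<not> (\<exists>R. bounded_clinear_op R \<and> (\<forall>x. R (T x - \<mu> *\<^sub>C x) = x)
                                   \<and> (\<forall>y. T (R y) - \<mu> *\<^sub>C R y = y))}"

text \<open>Adjoint of an operator with domain \<open>S\<close> (meaningful for densely defined operators).\<close>
definition adj_dom :: "'a::complex_inner set \<Rightarrow> ('a \<Rightarrow> 'a) \<Rightarrow> 'a set" where
  "adj_dom S T = {y. \<exists>z. \<forall>x\<in>S. cinner (T x) y = cinner x z}"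

definition adj :: "'a::complex_inner set \<Rightarrow> ('a \<Rightarrow> 'a) \<Rightarrow> 'a \<Rightarrow> 'a" where
  "adj S T y = (THE z. \<forall>x\<in>S. cinner (T x) y = cinner x z)"

definition ip_norm :: "('a \<Rightarrow> 'a \<Rightarrow> complex) \<Rightarrow> 'a \<Rightarrow> real" where
  "ip_norm ip x = sqrt (Re (ip x x))"

definition ip_conv :: "('a::ab_group_add \<Rightarrow> 'a \<Rightarrow> complex) \<Rightarrow> (nat \<Rightarrow> 'a) \<Rightarrow> 'a \<Rightarrow> bool" where
  "ip_conv ip s a \<longleftrightarrow> (\<lambda>n. ip_norm ip (s n - a)) \<longlonglongrightarrow> 0"

definition op_dense :: "('a::ab_group_add \<Rightarrow> 'a \<Rightarrow> complex) \<Rightarrow> 'a set \<Rightarrow> 'a set \<Rightarrow> bool" where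
  "op_dense ip X S \<longleftrightarrow> S \<subseteq> X \<and> (\<forall>a\<in>X. \<exists>s. (\<forall>n. s n \<in> S) \<and> ip_conv ip s a)"

definition op_closed :: "('a::ab_group_add \<Rightarrow> 'a \<Rightarrow> complex) \<Rightarrow> 'a set \<Rightarrow> 'a set \<Rightarrow> ('a \<Rightarrow> 'a) \<Rightarrow> bool" where
  "op_closed ip X S T \<longleftrightarrow> S \<subseteq> X \<and> (\<forall>x\<in>S. T x \<in> X) \<and>
     (\<forall>s a b. (\<forall>n. s n \<in> S) \<and> a \<in> X \<and> b \<in> X \<and> ip_conv ip s a \<and> ip_conv ip (\<lambda>n. T (s n)) b
        \<longrightarrow> a \<in> S \<and> T a = b)"

definition op_symmetric :: "('a::ab_group_add \<Rightarrow> 'a \<Rightarrow> complex) \<Rightarrow> 'a set \<Rightarrow> 'a set \<Rightarrow> ('a \<Rightarrow> 'a) \<Rightarrow> bool" where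
  "op_symmetric ip X S T \<longleftrightarrow> op_dense ip X S \<and> (\<forall>x\<in>S. T x \<in> X) \<and>
     (\<forall>x\<in>S. \<forall>y\<in>S. ip (T x) y = ip x (T y))"

definition self_adjoint_op :: "'a::complex_inner set \<Rightarrow> ('a \<Rightarrow> 'a) \<Rightarrow> bool" where
  "self_adjoint_op S T \<longleftrightarrow> clinear_on S T \<and> op_dense cinner UNIV S \<and>
     adj_dom S T = S \<and> (\<forall>y\<in>S. adj S T y = T y)"

definition has_compact_resolvent :: "'a::complex_inner set \<Rightarrow> ('a \<Rightarrow> 'a) \<Rightarrow> bool" where
  "has_compact_resolvent S T \<longleftrightarrow> (\<exists>\<mu> R. compact_op R \<and>
     (\<forall>y. R y \<in> S \<and> T (R y) - \<mu> *\<^sub>C R y = y) \<and> (\<forall>x\<in>S. R (T x - \<mu> *\<^sub>C x) = x))"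

definition admissible :: "'a::chilbert set \<Rightarrow> ('a \<Rightarrow> 'a) \<Rightarrow> ('a \<Rightarrow> 'a) \<Rightarrow> bool" where
  "admissible domD D V \<longleftrightarrow>
     clinear_on domD D \<and> op_dense cinner UNIV domD \<and> op_closed cinner UNIV domD D \<and>
     (\<exists>\<phi>. \<phi> \<noteq> 0 \<and> {x\<in>domD. D x = 0} = range (\<lambda>c. c *\<^sub>C \<phi>)) \<and>
     (\<exists>S. S \<subseteq> domD \<and> self_adjoint_op S D \<and> has_compact_resolvent S D) \<and>
     compact_op V \<and> bspectrum V = {0} \<and>
     range V \<subseteq> domD \<and> (\<forall>x. D (V x) = x)"

definition phi :: "('a::chilbert \<Rightarrow> 'a) \<Rightarrow> 'a \<Rightarrow> complex \<Rightarrow> 'a" where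
  "phi V \<phi>0 \<mu> = (THE y. y - \<mu> *\<^sub>C V y = \<phi>0)"

definition gft :: "('a::chilbert \<Rightarrow> 'a) \<Rightarrow> 'a \<Rightarrow> 'a \<Rightarrow> complex \<Rightarrow> complex" where
  "gft V \<phi>0 x = (\<lambda>\<mu>. cinner x (phi V \<phi>0 (cnj \<mu>)))"

definition WH :: "('a::chilbert \<Rightarrow> 'a) \<Rightarrow> 'a \<Rightarrow> (complex \<Rightarrow> complex) set" where
  "WH V \<phi>0 = range (gft V \<phi>0)"

definition WH_inner :: "('a::chilbert \<Rightarrow> 'a) \<Rightarrow> 'a \<Rightarrow> (complex \<Rightarrow> complex) \<Rightarrow> (complex \<Rightarrow> complex) \<Rightarrow> complex" where
  "WH_inner V \<phi>0 f g = cinner (inv_into UNIV (gft V \<phi>0) f) (inv_into UNIV (gft V \<phi>0) g)"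

text \<open>Backward shift \<open>Lg(z) = (g(z) - g(0))/z\<close>, with value \<open>g'(0)\<close> at \<open>z = 0\<close> (its entire extension).\<close>
definition backward_shift :: "(complex \<Rightarrow> complex) \<Rightarrow> complex \<Rightarrow> complex" where
  "backward_shift g z = (if z = 0 then deriv g 0 else (g z - g 0) / z)"

definition Mz_dom :: "('a::chilbert \<Rightarrow> 'a) \<Rightarrow> 'a \<Rightarrow> (complex \<Rightarrow> complex) set" where
  "Mz_dom V \<phi>0 = {f \<in> WH V \<phi>0. (\<lambda>z. z * f z) \<in> WH V \<phi>0}"

definition Mz :: "(complex \<Rightarrow> complex) \<Rightarrow> complex \<Rightarrow> complex" where
  "Mz f = (\<lambda>z. z * f z)"

end

theory Submission
  imports Defs
begin

lemma scaleC_zero_right[simp]: "a *\<^sub>C (0::'a::complex_vector) = 0"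
proof -
  have "a *\<^sub>C (0::'a) = a *\<^sub>C 0 + a *\<^sub>C 0" by (metis add_0 scaleC_add_right)
  thus ?thesis by simp
qed

lemma scaleC_zero_left[simp]: "0 *\<^sub>C (x::'a::complex_vector) = 0"
  by (metis scaleR_scaleC scaleR_zero_left of_real_0)

lemma scaleC_minus1: "(-1) *\<^sub>C (x::'a::complex_vector) = - x"
  by (metis scaleR_scaleC scaleR_minus1_left of_real_1 of_real_minus)

lemma scaleC_minus_left: "(- a) *\<^sub>C (x::'a::complex_vector) = - (a *\<^sub>C x)"
  by (metis scaleC_minus1 scaleC_scaleC mult_minus1)

lemma scaleC_minus_right: "a *\<^sub>C (- x::'a::complex_vector) = - (a *\<^sub>C x)"
  by (metis scaleC_minus1 scaleC_scaleC mult_minus1 mult.commute)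

lemma scaleC_diff_right: "a *\<^sub>C (x - y::'a::complex_vector) = a *\<^sub>C x - a *\<^sub>C y"
  by (metis diff_conv_add_uminus scaleC_add_right scaleC_minus_right)

lemma scaleC_diff_left: "(a - b) *\<^sub>C (x::'a::complex_vector) = a *\<^sub>C x - b *\<^sub>C x"
  by (metis diff_conv_add_uminus scaleC_add_left scaleC_minus_left)

lemma scaleC_eq_0_iff: "a *\<^sub>C (x::'a::complex_vector) = 0 \<longleftrightarrow> a = 0 \<or> x = 0"
proof
  assume h: "a *\<^sub>C x = 0"
  show "a = 0 \<or> x = 0"
  proof (cases "a = 0")
    case False
    have "x = (inverse a * a) *\<^sub>C x" using False by (simp add: scaleC_one)
    also have "\<dots> = 0" by (simp add: h flip: scaleC_scaleC)
    finally show ?thesis by simp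
  qed simp
qed auto

lemma scaleC_sum_right: "a *\<^sub>C sum f A = (\<Sum>i\<in>A. a *\<^sub>C (f i::'a::complex_vector))"
  by (induction A rule: infinite_finite_induct) (auto simp: scaleC_add_right)

lemma cinner_zero_left[simp]: "cinner 0 y = 0" for x y z :: "'a::complex_inner"
proof -
  have "cinner 0 y = cinner (0 + 0) y" by simp
  also have "\<dots> = cinner 0 y + cinner 0 y" by (rule cinner_add_left)
  finally show ?thesis by simp
qed
lemma cinner_zero_right[simp]: "cinner y 0 = 0" for x y z :: "'a::complex_inner"
  by (subst cinner_commute) simp
lemma cinner_add_right: "cinner x (y + z) = cinner x y + cinner x z" for x y z :: "'a::complex_inner"
  apply (subst (1 2 3) cinner_commute) by (simp add: cinner_add_left)
lemma cinner_minus_left: "cinner (- x) y = - cinner x y" for x y z :: "'a::complex_inner"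
proof -
  have "cinner (- x) y = cinner ((-1) *\<^sub>C x) y" by (simp only: scaleC_minus1)
  also have "\<dots> = - cinner x y" by (simp only: cinner_scaleC_left) simp
  finally show ?thesis .
qed
lemma cinner_minus_right: "cinner x (- y) = - cinner x y" for x y z :: "'a::complex_inner"
  apply (subst (1 2) cinner_commute) by (simp add: cinner_minus_left)
lemma cinner_diff_left: "cinner (x - y) z = cinner x z - cinner y z" for x y z :: "'a::complex_inner"
  by (simp only: diff_conv_add_uminus cinner_add_left cinner_minus_left)
lemma cinner_diff_right: "cinner x (y - z) = cinner x y - cinner x z" for x y z :: "'a::complex_inner"
  by (simp only: diff_conv_add_uminus cinner_add_right cinner_minus_right)
lemma cinner_scaleC_right: "cinner x (a *\<^sub>C y) = cnj a * cinner x y" for x y z :: "'a::complex_inner"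
  apply (subst (1 2) cinner_commute) by (simp add: cinner_scaleC_left)
lemma cinner_self: "cinner x x = complex_of_real ((norm x)\<^sup>2)" for x y z :: "'a::complex_inner"
proof -
  have r: "Im (cinner x x) = 0" using cinner_commute[of x x]
    by (metis Im_complex_of_real Reals_cnj_iff Reals_def complex_is_Real_iff)
  have h: "(norm x)\<^sup>2 = Re (cinner x x)" using cinner_nonneg[of x]
    by (simp only: norm_eq_sqrt_cinner real_sqrt_pow2)
  show ?thesis
  proof (rule complex_eqI)
    show "Re (cinner x x) = Re (complex_of_real ((norm x)\<^sup>2))" by (simp only: Re_complex_of_real h)
    show "Im (cinner x x) = Im (complex_of_real ((norm x)\<^sup>2))" by (simp only: Im_complex_of_real r)
  qed
qed
lemma cinner_sum_left: "cinner (sum f A) (y::'a::complex_inner) = (\<Sum>i\<in>A. cinner (f i) y)"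
  by (induction A rule: infinite_finite_induct) (auto simp: cinner_add_left)

lemma norm_scaleC: "norm (a *\<^sub>C (x::'a::complex_inner)) = cmod a * norm x"
proof -
  have "complex_of_real ((norm (a *\<^sub>C x))\<^sup>2) = cinner (a *\<^sub>C x) (a *\<^sub>C x)" by (simp add: cinner_self)
  also have "\<dots> = (a * cnj a) * cinner x x" by (simp add: cinner_scaleC_left cinner_scaleC_right mult.assoc)
  also have "\<dots> = complex_of_real ((cmod a * norm x)\<^sup>2)"
    by (simp only: cinner_self complex_norm_square[symmetric] power_mult_distrib of_real_mult)
  finally have "(norm (a *\<^sub>C x))\<^sup>2 = (cmod a * norm x)\<^sup>2" using of_real_eq_iff by blast
  thus ?thesis by (simp add: power2_eq_iff_nonneg)
qed

lemma cauchy_schwarz: "cmod (cinner x y) \<le> norm x * norm (y::'a::complex_inner)"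
proof (cases "y = 0")
  case True thus ?thesis by simp
next
  case False
  hence ny: "norm y > 0" by simp
  define n where "n = (norm y)\<^sup>2"
  have n0: "n > 0" using ny by (simp add: n_def)
  define c where "c = cinner x y"
  define t where "t = c / complex_of_real n"
  have yy: "cinner y y = complex_of_real n" unfolding n_def by (rule cinner_self)
  have yx: "cinner y x = cnj c" unfolding c_def by (rule cinner_commute)
  have ct: "cnj t = cnj c / complex_of_real n" by (simp add: t_def)
  have "0 \<le> Re (cinner (x - t *\<^sub>C y) (x - t *\<^sub>C y))" by (rule cinner_nonneg)
  also have "cinner (x - t *\<^sub>C y) (x - t *\<^sub>C y) = cinner x x - cnj t * c - t * cnj c + t * cnj t * complex_of_real n"
    by (simp add: cinner_diff_left cinner_diff_right cinner_scaleC_left cinner_scaleC_right algebra_simps yy yx c_def)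
  also have "\<dots> = cinner x x - c * cnj c / complex_of_real n"
    using n0 unfolding ct t_def by (simp add: field_simps)
  also have "c * cnj c = complex_of_real ((cmod c)\<^sup>2)" by (rule complex_norm_square[symmetric])
  also have "cinner x x = complex_of_real ((norm x)\<^sup>2)" by (rule cinner_self)
  also have "complex_of_real ((norm x)\<^sup>2) - complex_of_real ((cmod c)\<^sup>2) / complex_of_real n
     = complex_of_real ((norm x)\<^sup>2 - (cmod c)\<^sup>2 / n)" by simp
  finally have "0 \<le> (norm x)\<^sup>2 - (cmod c)\<^sup>2 / n"
    by (simp only: Re_complex_of_real)
  hence "(cmod c)\<^sup>2 \<le> (norm x)\<^sup>2 * n" using n0 by (simp add: field_simps)
  hence "(cmod c)\<^sup>2 \<le> (norm x * norm y)\<^sup>2" by (simp add: n_def power_mult_distrib)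
  thus ?thesis unfolding c_def by (simp add: power2_le_iff_abs_le)
qed

section \<open>Bounded operators\<close>

lemma bop_add: "bounded_clinear_op T \<Longrightarrow> T (x + y) = T x + T y"
  by (simp add: bounded_clinear_op_def clinear_on_def)
lemma bop_scale: "bounded_clinear_op T \<Longrightarrow> T (c *\<^sub>C x) = c *\<^sub>C T x"
  by (simp add: bounded_clinear_op_def clinear_on_def)
lemma bop_zero: "bounded_clinear_op T \<Longrightarrow> T 0 = 0"
proof -
  assume a: "bounded_clinear_op T"
  have "T 0 = T (0 *\<^sub>C 0)" by simp
  also have "\<dots> = 0 *\<^sub>C T 0" by (rule bop_scale[OF a])
  finally show ?thesis by simp
qed
lemma bop_minus: "bounded_clinear_op T \<Longrightarrow> T (- x) = - T x"
proof -
  assume a: "bounded_clinear_op T"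
  have "T (- x) = T ((-1) *\<^sub>C x)" by (simp only: scaleC_minus1)
  also have "\<dots> = (-1) *\<^sub>C T x" by (rule bop_scale[OF a])
  finally show ?thesis by (simp only: scaleC_minus1)
qed
lemma bop_diff: "bounded_clinear_op T \<Longrightarrow> T (x - y) = T x - T y"
  by (simp only: diff_conv_add_uminus bop_add bop_minus)
lemma bop_bound:
  fixes T :: "'a::complex_inner \<Rightarrow> 'b::complex_inner"
  assumes "bounded_clinear_op T"
  shows "\<exists>K>0. \<forall>x. norm (T x) \<le> K * norm x"
proof -
  obtain K where K: "\<forall>x. norm (T x) \<le> K * norm x" using assms by (auto simp: bounded_clinear_op_def)
  have "\<forall>x. norm (T x) \<le> (\<bar>K\<bar> + 1) * norm x"
  proof
    fix x :: 'a
    have "K * norm x \<le> (\<bar>K\<bar> + 1) * norm x" by (intro mult_right_mono) auto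
    thus "norm (T x) \<le> (\<bar>K\<bar> + 1) * norm x" using K by (meson order_trans)
  qed
  thus ?thesis by (intro exI[of _ "\<bar>K\<bar> + 1"]) auto
qed

lemma tendsto_bound_lin:
  assumes "\<forall>x. norm (T x) \<le> K * norm x" "\<forall>x y. T (x - y) = T x - T y"
    and "(f \<longlongrightarrow> l) F"
  shows "((\<lambda>n. T (f n)) \<longlongrightarrow> T l) F"
proof -
  have "((\<lambda>n. f n - l) \<longlongrightarrow> 0) F" using assms(3) by (simp add: LIM_zero)
  hence "((\<lambda>n. norm (f n - l)) \<longlongrightarrow> 0) F" by (simp add: tendsto_norm_zero_iff)
  hence "((\<lambda>n. K * norm (f n - l)) \<longlongrightarrow> 0) F" using tendsto_mult_left[of _ 0 F K] by simp
  hence "((\<lambda>n. T (f n) - T l) \<longlongrightarrow> 0) F"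
  proof (rule Lim_null_comparison[rotated])
    show "\<forall>\<^sub>F n in F. norm (T (f n) - T l) \<le> K * norm (f n - l)"
    proof (rule always_eventually, rule allI)
      fix n
      have "T (f n) - T l = T (f n - l)" using assms(2) by simp
      thus "norm (T (f n) - T l) \<le> K * norm (f n - l)" using assms(1) by simp
    qed
  qed
  thus ?thesis by (simp add: LIM_zero_iff)
qed

lemma bop_tendsto: "bounded_clinear_op T \<Longrightarrow> (f \<longlongrightarrow> l) F \<Longrightarrow> ((\<lambda>n. T (f n)) \<longlongrightarrow> T l) F"
  using bop_bound[of T] bop_diff[of T] tendsto_bound_lin by blast

lemma tendsto_cinner:
  fixes f g :: "_ \<Rightarrow> 'a::complex_inner"
  assumes f: "(f \<longlongrightarrow> a) F" and g: "(g \<longlongrightarrow> b) F"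
  shows "((\<lambda>n. cinner (f n) (g n)) \<longlongrightarrow> cinner a b) F"
proof -
  have f0: "((\<lambda>n. norm (f n - a)) \<longlongrightarrow> 0) F" using f by (simp add: LIM_zero tendsto_norm_zero_iff)
  have g0: "((\<lambda>n. norm (g n - b)) \<longlongrightarrow> 0) F" using g by (simp add: LIM_zero tendsto_norm_zero_iff)
  have 1: "((\<lambda>n. cinner (f n - a) (g n - b)) \<longlongrightarrow> 0) F"
    by (rule Lim_null_comparison[where g="\<lambda>n. norm (f n - a) * norm (g n - b)"])
       (auto intro!: always_eventually cauchy_schwarz simp: tendsto_mult[OF f0 g0, simplified])
  have 2: "((\<lambda>n. cinner (f n - a) b) \<longlongrightarrow> 0) F"
    by (rule Lim_null_comparison[where g="\<lambda>n. norm (f n - a) * norm b"])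
       (auto intro!: always_eventually cauchy_schwarz simp: tendsto_mult[OF f0 tendsto_const, simplified])
  have 3: "((\<lambda>n. cinner a (g n - b)) \<longlongrightarrow> 0) F"
    by (rule Lim_null_comparison[where g="\<lambda>n. norm a * norm (g n - b)"])
       (auto intro!: always_eventually cauchy_schwarz simp: tendsto_mult[OF tendsto_const g0, simplified])
  have "((\<lambda>n. cinner (f n - a) (g n - b) + cinner (f n - a) b + cinner a (g n - b)) \<longlongrightarrow> 0) F"
    using tendsto_add[OF tendsto_add[OF 1 2] 3] by simp
  moreover have "\<And>n. cinner (f n - a) (g n - b) + cinner (f n - a) b + cinner a (g n - b) = cinner (f n) (g n) - cinner a b"
    by (simp add: cinner_diff_left cinner_diff_right)
  ultimately show ?thesis by (simp add: LIM_zero_iff)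
qed

lemma ip_norm_cinner: "ip_norm cinner x = norm x"
  by (simp add: ip_norm_def norm_eq_sqrt_cinner)

lemma ip_conv_cinner: "ip_conv cinner s a \<longleftrightarrow> s \<longlonglongrightarrow> a"
  by (simp add: ip_conv_def ip_norm_cinner tendsto_norm_zero_iff LIM_zero_iff)

lemma dense_orth_zero:
  assumes "op_dense cinner UNIV S" "\<forall>x\<in>S. cinner x z = 0"
  shows "z = 0"
proof -
  obtain s where s: "\<forall>n. s n \<in> S" "s \<longlonglongrightarrow> z" using assms(1) by (auto simp: op_dense_def ip_conv_cinner)
  have "(\<lambda>n. cinner (s n) z) \<longlonglongrightarrow> cinner z z" by (intro tendsto_cinner s tendsto_const)
  moreover have "(\<lambda>n. cinner (s n) z) = (\<lambda>n. 0)" using s assms(2) by auto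
  ultimately have "cinner z z = 0" using LIMSEQ_unique tendsto_const by metis
  thus ?thesis by (simp add: cinner_eq_zero_iff)
qed

lemma adj_eqI:
  assumes "op_dense cinner UNIV S" "\<forall>x\<in>S. cinner (T x) y = cinner x z"
  shows "adj S T y = z"
  unfolding adj_def
proof (rule the_equality)
  show "\<forall>x\<in>S. cinner (T x) y = cinner x z" by fact
  fix z' assume h: "\<forall>x\<in>S. cinner (T x) y = cinner x z'"
  have "\<forall>x\<in>S. cinner x (z' - z) = 0" using h assms(2) by (simp add: cinner_diff_right)
  hence "z' - z = 0" by (rule dense_orth_zero[OF assms(1)])
  thus "z' = z" by simp
qed

lemma dense_UNIV: "op_dense cinner UNIV (UNIV::'a::complex_inner set)"
  unfolding op_dense_def ip_conv_cinner
proof (intro conjI ballI)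
  fix a :: 'a
  show "\<exists>s. (\<forall>n. s n \<in> UNIV) \<and> s \<longlonglongrightarrow> a" using tendsto_const[of a sequentially] by blast
qed simp

section \<open>Projection and Riesz\<close>

lemma parallelogram: "(norm (a + b))\<^sup>2 + (norm (a - b))\<^sup>2 = 2 * (norm a)\<^sup>2 + 2 * (norm (b::'a::complex_inner))\<^sup>2"
proof -
  have "complex_of_real ((norm (a + b))\<^sup>2 + (norm (a - b))\<^sup>2) = cinner (a+b) (a+b) + cinner (a-b) (a-b)"
    by (simp add: cinner_self)
  also have "\<dots> = 2 * cinner a a + 2 * cinner b b"
    by (simp add: cinner_add_left cinner_add_right cinner_diff_left cinner_diff_right)
  also have "\<dots> = complex_of_real (2 * (norm a)\<^sup>2 + 2 * (norm b)\<^sup>2)" by (simp add: cinner_self)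
  finally show ?thesis using of_real_eq_iff by blast
qed

lemma csubspace_0: "csubspace M \<Longrightarrow> 0 \<in> M" by (simp add: csubspace_def)
lemma csubspace_add: "csubspace M \<Longrightarrow> x \<in> M \<Longrightarrow> y \<in> M \<Longrightarrow> x + y \<in> M" by (simp add: csubspace_def)
lemma csubspace_scale: "csubspace M \<Longrightarrow> x \<in> M \<Longrightarrow> c *\<^sub>C x \<in> M" by (simp add: csubspace_def)
lemma csubspace_minus: "csubspace M \<Longrightarrow> x \<in> M \<Longrightarrow> - x \<in> M" by (metis csubspace_scale scaleC_minus1)
lemma csubspace_diff: "csubspace M \<Longrightarrow> x \<in> M \<Longrightarrow> y \<in> M \<Longrightarrow> x - y \<in> M"
  by (metis csubspace_add csubspace_minus diff_conv_add_uminus)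

lemma norm_diff_sq: "(norm (u - t *\<^sub>C m))\<^sup>2 = (norm u)\<^sup>2 - 2 * Re (cnj t * cinner u m) + (cmod t)\<^sup>2 * (norm (m::'a::complex_inner))\<^sup>2"
proof -
  have e: "cinner (u - t *\<^sub>C m) (u - t *\<^sub>C m) = cinner u u - cnj t * cinner u m - t * cinner m u + t * cnj t * cinner m m"
    by (simp add: cinner_diff_left cinner_diff_right cinner_scaleC_left cinner_scaleC_right algebra_simps)
  have "Re (cinner (u - t *\<^sub>C m) (u - t *\<^sub>C m)) = Re (cinner u u) - Re (cnj t * cinner u m) - Re (t * cinner m u) + Re (t * cnj t) * Re (cinner m m)"
    unfolding e by (simp add: cinner_self)
  also have "Re (t * cinner m u) = Re (cnj t * cinner u m)"
    by (subst cinner_commute[of m u]) simp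
  also have "Re (t * cnj t) = (cmod t)\<^sup>2" by (simp add: complex_norm_square[symmetric])
  finally show ?thesis by (simp add: cinner_self)
qed

lemma min_orth:
  fixes M :: "'a::complex_inner set"
  assumes M: "csubspace M" and p: "p \<in> M" and min: "\<forall>m\<in>M. norm (x - p) \<le> norm (x - m)"
  shows "\<forall>m\<in>M. cinner (x - p) m = 0"
proof
  fix m assume m: "m \<in> M"
  define c where "c = cinner (x - p) m"
  define s :: real where "s = 1 / ((norm m)\<^sup>2 + 1)"
  have n0: "(norm m)\<^sup>2 + 1 > 0" by (simp add: add_nonneg_pos)
  have s0: "s > 0" using n0 by (simp add: s_def)
  have sm: "s * (norm m)\<^sup>2 < 2"
  proof -
    have "s * (norm m)\<^sup>2 < s * ((norm m)\<^sup>2 + 1)" using s0 by simp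
    also have "\<dots> = 1" using n0 by (simp add: s_def)
    finally show ?thesis by simp
  qed
  define t where "t = complex_of_real s * c"
  have "p + t *\<^sub>C m \<in> M" using M p m by (simp add: csubspace_add csubspace_scale)
  hence "norm (x - p) \<le> norm ((x - p) - t *\<^sub>C m)" using min by (metis diff_diff_eq)
  hence "(norm (x - p))\<^sup>2 \<le> (norm ((x - p) - t *\<^sub>C m))\<^sup>2" by (simp add: power_mono)
  also have "\<dots> = (norm (x - p))\<^sup>2 - 2 * Re (cnj t * c) + (cmod t)\<^sup>2 * (norm m)\<^sup>2"
    by (simp add: norm_diff_sq c_def)
  also have "cnj t * c = complex_of_real (s * (cmod c)\<^sup>2)"
    by (simp add: t_def complex_norm_square[symmetric] mult.commute)
  also have "(cmod t)\<^sup>2 = s\<^sup>2 * (cmod c)\<^sup>2" using s0 by (simp add: t_def norm_mult power_mult_distrib)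
  finally have "0 \<le> s * (cmod c)\<^sup>2 * (s * (norm m)\<^sup>2 - 2)" by (simp add: algebra_simps power2_eq_square)
  moreover have "s * (norm m)\<^sup>2 - 2 < 0" using sm by simp
  ultimately have "s * (cmod c)\<^sup>2 \<le> 0" using mult_pos_neg[of "s * (cmod c)\<^sup>2" "s * (norm m)\<^sup>2 - 2"] by linarith
  hence "(cmod c)\<^sup>2 \<le> 0" using s0 by (simp add: mult_le_0_iff)
  thus "c = 0" by simp
qed

lemma norm_two_scale: "norm ((2::complex) *\<^sub>C (y::'a::complex_inner)) = 2 * norm y"
  by (simp add: norm_scaleC)

lemma two_scaleC: "(2::complex) *\<^sub>C (y::'a::complex_vector) = y + y"
proof -
  have "(2::complex) *\<^sub>C y = (1 + 1) *\<^sub>C y" by simp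
  also have "\<dots> = y + y" by (simp only: scaleC_add_left scaleC_one)
  finally show ?thesis .
qed

lemma proj_exists:
  fixes M :: "'a::chilbert set"
  assumes M: "csubspace M" "closed M"
  shows "\<exists>p\<in>M. \<forall>m\<in>M. cinner (x - p) m = 0"
proof -
  define d where "d = Inf ((\<lambda>m. norm (x - m)) ` M)"
  have ne: "(\<lambda>m. norm (x - m)) ` M \<noteq> {}" using csubspace_0[OF M(1)] by auto
  have bdd: "bdd_below ((\<lambda>m. norm (x - m)) ` M)" by (rule bdd_belowI[of _ 0]) auto
  have dle: "d \<le> norm (x - m)" if "m \<in> M" for m
    unfolding d_def using that bdd by (simp add: cInf_lower)
  have d0: "0 \<le> d" unfolding d_def by (rule cInf_greatest[OF ne]) auto
  define e :: "nat \<Rightarrow> real" where "e n = 1 / (real n + 1)" for n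
  have e0: "0 < e n" "e n \<le> 1" for n by (auto simp: e_def field_simps)
  have "\<forall>n. \<exists>m. m \<in> M \<and> norm (x - m) < d + e n"
  proof
    fix n :: nat
    have "Inf ((\<lambda>m. norm (x - m)) ` M) < d + e n" using e0(1)[of n] by (simp add: d_def)
    then obtain v where "v \<in> (\<lambda>m. norm (x - m)) ` M" "v < d + e n" using cInf_lessD[OF ne] by blast
    thus "\<exists>m. m \<in> M \<and> norm (x - m) < d + e n" by auto
  qed
  then obtain mm where mmM: "\<And>n. mm n \<in> M" and mmd: "\<And>n. norm (x - mm n) < d + e n"
    by (auto simp: choice_iff)
  have key: "(norm (mm a - mm b))\<^sup>2 \<le> (4 * d + 2) * (e a + e b)" for a b
  proof -
    define u where "u = x - mm a"
    define v where "v = x - mm b"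
    define mid where "mid = (1/2::complex) *\<^sub>C (mm a + mm b)"
    have midM: "mid \<in> M" unfolding mid_def using M(1) mmM by (simp add: csubspace_add csubspace_scale)
    have "u + v = (2::complex) *\<^sub>C (x - mid)"
    proof -
      have "(2::complex) *\<^sub>C mid = mm a + mm b" unfolding mid_def by (simp add: scaleC_scaleC scaleC_one)
      hence "(2::complex) *\<^sub>C (x - mid) = x + x - (mm a + mm b)" by (simp add: scaleC_diff_right two_scaleC)
      thus ?thesis by (simp add: u_def v_def)
    qed
    hence nuv: "norm (u + v) = 2 * norm (x - mid)" by (simp add: norm_two_scale)
    have "2 * d \<le> norm (u + v)" using dle[OF midM] nuv by simp
    hence "(2 * d)\<^sup>2 \<le> (norm (u + v))\<^sup>2" using d0 by (intro power_mono) auto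
    hence "4 * d\<^sup>2 \<le> (norm (u + v))\<^sup>2" by (simp add: power_mult_distrib)
    have uv: "u - v = mm b - mm a" by (simp add: u_def v_def)
    have par: "(norm (u + v))\<^sup>2 + (norm (mm a - mm b))\<^sup>2 = 2 * (norm u)\<^sup>2 + 2 * (norm v)\<^sup>2"
      using parallelogram[of u v] uv by (simp add: norm_minus_commute)
    have nu: "(norm u)\<^sup>2 \<le> (d + e a)\<^sup>2" unfolding u_def using mmd[of a] by (simp add: power_mono)
    have nv: "(norm v)\<^sup>2 \<le> (d + e b)\<^sup>2" unfolding v_def using mmd[of b] by (simp add: power_mono)
    have ea: "e a * e a \<le> e a" using e0[of a] by (simp add: mult_left_le_one_le)
    have eb: "e b * e b \<le> e b" using e0[of b] by (simp add: mult_left_le_one_le)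
    show ?thesis using par nu nv ea eb \<open>4 * d\<^sup>2 \<le> (norm (u + v))\<^sup>2\<close>
      by (simp add: power2_eq_square algebra_simps)
  qed
  have cauchy: "Cauchy mm"
  proof (rule metric_CauchyI)
    fix r :: real assume r: "r > 0"
    define \<delta> where "\<delta> = r\<^sup>2 / (8 * d + 4)"
    have \<delta>: "\<delta> > 0" using r d0 by (simp add: \<delta>_def)
    obtain N where N: "inverse (real (Suc N)) < \<delta>" using reals_Archimedean[OF \<delta>] by blast
    have eN: "e n < \<delta>" if "n \<ge> N" for n
    proof -
      have "e n \<le> inverse (real (Suc N))" using that by (simp add: e_def field_simps)
      thus ?thesis using N by simp
    qed
    show "\<exists>N. \<forall>m\<ge>N. \<forall>n\<ge>N. dist (mm m) (mm n) < r"
    proof (intro exI allI impI)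
      fix m n assume mn: "m \<ge> N" "n \<ge> N"
      have "(4 * d + 2) * (e m + e n) < (4 * d + 2) * (2 * \<delta>)"
        using eN[OF mn(1)] eN[OF mn(2)] d0 by (intro mult_strict_left_mono) auto
      also have "\<dots> = r\<^sup>2" using d0 by (simp add: \<delta>_def field_simps)
      finally have "(dist (mm m) (mm n))\<^sup>2 < r\<^sup>2" using key[of m n] by (simp add: dist_norm)
      thus "dist (mm m) (mm n) < r" using r by (simp add: power_less_imp_less_base)
    qed
  qed
  then obtain p where p: "mm \<longlonglongrightarrow> p" using complete_UNIV convergent_def by (metis Cauchy_convergent)
  have pM: "p \<in> M" using closed_sequentially[OF M(2)] mmM p by blast
  have lim1: "(\<lambda>n. norm (x - mm n)) \<longlonglongrightarrow> norm (x - p)" by (intro tendsto_intros p)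
  have "e = (\<lambda>n. inverse (real (Suc n)))" by (auto simp: e_def inverse_eq_divide add.commute)
  hence e_lim: "e \<longlonglongrightarrow> 0" using LIMSEQ_inverse_real_of_nat by simp
  have lim2: "(\<lambda>n. d + e n) \<longlonglongrightarrow> d" using tendsto_add[OF tendsto_const e_lim] by simp
  have "norm (x - p) \<le> d"
    by (rule LIMSEQ_le[OF lim1 lim2]) (use mmd less_imp_le in auto)
  hence "\<forall>m\<in>M. norm (x - p) \<le> norm (x - m)" using dle by force
  from min_orth[OF M(1) pM this] pM show ?thesis by blast
qed


lemma cinner_ext: "(\<And>x. cinner x a = cinner x b) \<Longrightarrow> a = (b::'a::complex_inner)"
proof -
  assume h: "\<And>x. cinner x a = cinner x b"
  have "cinner (a - b) (a - b) = 0" using h[of "a - b"] by (simp add: cinner_diff_right)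
  thus ?thesis by (simp add: cinner_eq_zero_iff)
qed

lemma tendsto_scaleC_const:
  "(f \<longlongrightarrow> l) F \<Longrightarrow> ((\<lambda>n. c *\<^sub>C f n) \<longlongrightarrow> c *\<^sub>C (l::'a::complex_inner)) F"
  by (rule tendsto_bound_lin[where T="\<lambda>x. c *\<^sub>C x" and K="cmod c"]) (auto simp: norm_scaleC scaleC_diff_right)

lemma riesz:
  fixes f :: "'a::chilbert \<Rightarrow> complex"
  assumes add: "\<And>x y. f (x + y) = f x + f y" and sc: "\<And>c x. f (c *\<^sub>C x) = c * f x"
    and bd: "\<And>x. cmod (f x) \<le> K * norm x"
  shows "\<exists>z. \<forall>x. f x = cinner x z"
proof -
  have f0: "f 0 = 0" using sc[of 0 0] by simp
  have fminus: "f (- x) = - f x" for x using sc[of "-1" x] by (simp add: scaleC_minus1)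
  have fdiff: "f (x - y) = f x - f y" for x y by (simp only: diff_conv_add_uminus add fminus)
  define N where "N = {x. f x = 0}"
  have NS: "csubspace N" by (auto simp: csubspace_def N_def add sc f0)
  have NC: "closed N"
  proof (unfold closed_sequential_limits, intro allI impI, elim conjE)
    fix s l assume s: "\<forall>n. s n \<in> N" and l: "s \<longlonglongrightarrow> l"
    have "(\<lambda>n. f (s n)) \<longlonglongrightarrow> f l"
      by (rule tendsto_bound_lin[where K=K]) (use bd fdiff l in auto)
    moreover have "(\<lambda>n. f (s n)) = (\<lambda>n. 0)" using s by (auto simp: N_def)
    ultimately have "f l = 0" using LIMSEQ_unique tendsto_const by metis
    thus "l \<in> N" by (simp add: N_def)
  qed
  show ?thesis
  proof (cases "\<forall>x. f x = 0")
    case True thus ?thesis by (intro exI[of _ 0]) simp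
  next
    case False
    then obtain w where w: "f w \<noteq> 0" by blast
    obtain p where p: "p \<in> N" "\<forall>m\<in>N. cinner (w - p) m = 0" using proj_exists[OF NS NC] by blast
    define q where "q = w - p"
    have fq: "f q = f w" using p(1) by (simp add: q_def fdiff N_def)
    hence "q \<noteq> 0" using w f0 by auto
    hence qq: "cinner q q \<noteq> 0" by (simp add: cinner_eq_zero_iff)
    define z where "z = cnj (f q / cinner q q) *\<^sub>C q"
    have "f x = cinner x z" for x
    proof -
      define u where "u = x - (f x / f q) *\<^sub>C q"
      have "f u = 0" using fq w by (simp add: u_def fdiff sc)
      hence "cinner q u = 0" using p(2) by (simp add: q_def N_def)
      hence "cinner u q = 0" by (subst cinner_commute) simp
      hence "cinner x q = (f x / f q) * cinner q q" by (simp add: u_def cinner_diff_left cinner_scaleC_left)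
      thus ?thesis using qq fq w by (simp add: z_def cinner_scaleC_right)
    qed
    thus ?thesis by blast
  qed
qed

lemma adj_prop:
  fixes T :: "'a::chilbert \<Rightarrow> 'a"
  assumes T: "bounded_clinear_op T"
  shows "cinner (T x) y = cinner x (adj UNIV T y)"
proof -
  obtain K where K: "K > 0" "\<forall>x. norm (T x) \<le> K * norm x" using bop_bound[OF T] by blast
  have "\<exists>z. \<forall>x. cinner (T x) y = cinner x z"
  proof (rule riesz[where K="K * norm y"])
    show "cinner (T (a + b)) y = cinner (T a) y + cinner (T b) y" for a b by (simp add: bop_add[OF T] cinner_add_left)
    show "cinner (T (c *\<^sub>C a)) y = c * cinner (T a) y" for c a by (simp add: bop_scale[OF T] cinner_scaleC_left)
    show "cmod (cinner (T a) y) \<le> K * norm y * norm a" for a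
    proof -
      have "cmod (cinner (T a) y) \<le> norm (T a) * norm y" by (rule cauchy_schwarz)
      also have "\<dots> \<le> K * norm a * norm y" using K(2) by (simp add: mult_right_mono)
      finally show ?thesis by (simp add: algebra_simps)
    qed
  qed
  then obtain z where z: "\<forall>x. cinner (T x) y = cinner x z" by blast
  have "adj UNIV T y = z" by (rule adj_eqI[OF dense_UNIV]) (use z in auto)
  thus ?thesis using z by simp
qed

lemma adj_bop:
  fixes T :: "'a::chilbert \<Rightarrow> 'a"
  assumes T: "bounded_clinear_op T"
  shows "bounded_clinear_op (adj UNIV T)"
proof -
  let ?A = "adj UNIV T"
  obtain K where K: "K > 0" "\<forall>x. norm (T x) \<le> K * norm x" using bop_bound[OF T] by blast
  have add: "?A (a + b) = ?A a + ?A b" for a b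
    by (rule cinner_ext) (simp add: adj_prop[OF T, symmetric] cinner_add_right)
  have sc: "?A (c *\<^sub>C a) = c *\<^sub>C ?A a" for c a
    by (rule cinner_ext) (simp add: adj_prop[OF T, symmetric] cinner_scaleC_right)
  have bd: "norm (?A y) \<le> K * norm y" for y
  proof -
    have "(norm (?A y))\<^sup>2 = cmod (cinner (?A y) (?A y))" by (simp only: cinner_self norm_of_real) simp
    also have "cinner (?A y) (?A y) = cinner (T (?A y)) y" by (simp add: adj_prop[OF T])
    also have "cmod \<dots> \<le> norm (T (?A y)) * norm y" by (rule cauchy_schwarz)
    also have "\<dots> \<le> K * norm (?A y) * norm y" using K(2) by (simp add: mult_right_mono)
    finally have h: "norm (?A y) * norm (?A y) \<le> (K * norm y) * norm (?A y)" by (simp add: power2_eq_square algebra_simps)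
    show ?thesis
    proof (cases "norm (?A y) = 0")
      case True thus ?thesis using K by simp
    next
      case False thus ?thesis using h by (simp add: mult_le_cancel_right)
    qed
  qed
  have "clinear_on UNIV ?A" unfolding clinear_on_def csubspace_def using add sc by simp
  moreover have "\<exists>K. \<forall>x. norm (?A x) \<le> K * norm x" using bd by blast
  ultimately show ?thesis unfolding bounded_clinear_op_def by blast
qed

lemma closure_csubspace:
  fixes S :: "'a::complex_inner set"
  assumes S: "csubspace S"
  shows "csubspace (closure S)"
  unfolding csubspace_def
proof (intro conjI ballI allI impI)
  show "0 \<in> closure S" using S csubspace_0 closure_subset by blast
  fix x y assume x: "x \<in> closure S" and y: "y \<in> closure S"
  obtain xs where xs: "\<forall>n. xs n \<in> S" "xs \<longlonglongrightarrow> x" using x by (auto simp only: closure_sequential)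
  obtain ys where ys: "\<forall>n. ys n \<in> S" "ys \<longlonglongrightarrow> y" using y by (auto simp only: closure_sequential)
  have "\<forall>n. xs n + ys n \<in> S" using xs ys S by (simp add: csubspace_add)
  moreover have "(\<lambda>n. xs n + ys n) \<longlonglongrightarrow> x + y" by (intro tendsto_add xs ys)
  ultimately have "(\<forall>n. xs n + ys n \<in> S) \<and> (\<lambda>n. xs n + ys n) \<longlonglongrightarrow> x + y" by (rule conjI)
  hence "\<exists>s. (\<forall>n. s n \<in> S) \<and> s \<longlonglongrightarrow> x + y"
    by (rule exI[where P="\<lambda>s. (\<forall>n. s n \<in> S) \<and> s \<longlonglongrightarrow> x + y" and x="\<lambda>n. xs n + ys n"])
  thus "x + y \<in> closure S" by (simp only: closure_sequential)
next
  fix c x assume x: "x \<in> closure S"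
  obtain xs where xs: "\<forall>n. xs n \<in> S" "xs \<longlonglongrightarrow> x" using x by (auto simp only: closure_sequential)
  have "\<forall>n. c *\<^sub>C xs n \<in> S" using xs S by (simp add: csubspace_scale)
  moreover have "(\<lambda>n. c *\<^sub>C xs n) \<longlonglongrightarrow> c *\<^sub>C x" by (intro tendsto_scaleC_const xs)
  ultimately have "(\<forall>n. c *\<^sub>C xs n \<in> S) \<and> (\<lambda>n. c *\<^sub>C xs n) \<longlonglongrightarrow> c *\<^sub>C x" by (rule conjI)
  hence "\<exists>s. (\<forall>n. s n \<in> S) \<and> s \<longlonglongrightarrow> c *\<^sub>C x"
    by (rule exI[where P="\<lambda>s. (\<forall>n. s n \<in> S) \<and> s \<longlonglongrightarrow> c *\<^sub>C x" and x="\<lambda>n. c *\<^sub>C xs n"])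
  thus "c *\<^sub>C x \<in> closure S" by (simp only: closure_sequential)
qed

lemma dense_from_orth:
  fixes S :: "'a::chilbert set"
  assumes S: "csubspace S" and orth: "\<And>y. (\<forall>x\<in>S. cinner x y = 0) \<Longrightarrow> y = 0"
  shows "op_dense cinner UNIV S"
proof -
  have all: "a \<in> closure S" for a
  proof -
    obtain p where p: "p \<in> closure S" "\<forall>m\<in>closure S. cinner (a - p) m = 0"
      using proj_exists[OF closure_csubspace[OF S] closed_closure] by blast
    have "\<forall>x\<in>S. cinner x (a - p) = 0"
    proof
      fix x assume "x \<in> S"
      hence "cinner (a - p) x = 0" using p(2) closure_subset by blast
      thus "cinner x (a - p) = 0" by (subst cinner_commute) simp
    qed
    hence "a - p = 0" by (rule orth)
    thus ?thesis using p(1) by simp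
  qed
  show ?thesis unfolding op_dense_def ip_conv_cinner
  proof (intro conjI ballI)
    fix a :: 'a
    show "\<exists>s. (\<forall>n. s n \<in> S) \<and> s \<longlonglongrightarrow> a" using all[of a] by (simp only: closure_sequential)
  qed simp
qed

definition seqcpt :: "('a::complex_inner \<Rightarrow> 'a) \<Rightarrow> bool" where
  "seqcpt T \<longleftrightarrow> (\<forall>(x::nat \<Rightarrow> 'a) (B::real). (\<forall>n. norm (x n) \<le> B) \<longrightarrow> (\<exists>r. strict_mono r \<and> convergent (\<lambda>n. T (x (r n)))))"

lemma seqcptD:
  fixes x :: "nat \<Rightarrow> 'a::complex_inner"
  assumes "seqcpt T" "\<forall>n. norm (x n) \<le> B"
  shows "\<exists>r. strict_mono r \<and> convergent (\<lambda>n. T (x (r n)))"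
  by (rule assms(1)[unfolded seqcpt_def, THEN spec[of _ x], THEN spec[of _ B], THEN mp, OF assms(2)])

lemma compact_seqcpt:
  fixes T :: "'a::chilbert \<Rightarrow> 'a"
  assumes T: "compact_op T"
  shows "seqcpt T"
  unfolding seqcpt_def
proof (intro allI impI)
  fix x :: "nat \<Rightarrow> 'a" and B :: real
  assume xB: "\<forall>n. norm (x n) \<le> B"
  have TT: "bounded_clinear_op T" using T by (simp add: compact_op_def)
  define c :: real where "c = \<bar>B\<bar> + 1"
  have c0: "c > 0" by (simp add: c_def)
  define y where "y n = complex_of_real (1 / c) *\<^sub>C x n" for n
  have yball: "y n \<in> ball 0 1" for n
  proof -
    have "norm (y n) = norm (x n) / c" using c0 by (simp add: y_def norm_scaleC norm_divide)
    also have "\<dots> \<le> B / c" using xB c0 by (simp add: divide_right_mono)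
    also have "\<dots> < 1" using c0 by (simp add: c_def field_simps)
    finally show ?thesis by simp
  qed
  have "compact (closure (T ` ball 0 1))" using T by (simp add: compact_op_def)
  hence sc: "seq_compact (closure (T ` ball 0 1))" by (rule compact_imp_seq_compact)
  have yc: "\<forall>n. T (y n) \<in> closure (T ` ball 0 1)"
  proof
    fix n
    have "T (y n) \<in> T ` ball 0 1" using yball[of n] by (rule imageI)
    thus "T (y n) \<in> closure (T ` ball 0 1)" by (rule subsetD[OF closure_subset])
  qed
  obtain l r where r: "strict_mono r" "((\<lambda>n. T (y n)) \<circ> r) \<longlonglongrightarrow> l"
    using sc[unfolded seq_compact_def, THEN spec[of _ "\<lambda>n. T (y n)"], THEN mp, OF yc] by blast
  have xy: "x n = complex_of_real c *\<^sub>C y n" for n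
    using c0 by (simp add: y_def scaleC_scaleC scaleC_one flip: of_real_mult)
  have "(\<lambda>n. T (x (r n))) = (\<lambda>n. complex_of_real c *\<^sub>C T (y (r n)))"
    by (simp add: xy bop_scale[OF TT])
  moreover have "(\<lambda>n. complex_of_real c *\<^sub>C T (y (r n))) \<longlonglongrightarrow> complex_of_real c *\<^sub>C l"
    using r(2) by (intro tendsto_scaleC_const) (simp add: comp_def)
  ultimately have "convergent (\<lambda>n. T (x (r n)))" unfolding convergent_def by auto
  thus "\<exists>r. strict_mono r \<and> convergent (\<lambda>n. T (x (r n)))" using r(1) by blast
qed

lemma seqcpt_add:
  assumes S: "seqcpt S" and T: "seqcpt T"
  shows "seqcpt (\<lambda>x. S x + T x)"
  unfolding seqcpt_def
proof (intro allI impI)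
  fix x :: "nat \<Rightarrow> 'a" and B :: real
  assume xB: "\<forall>n. norm (x n) \<le> B"
  obtain r1 where r1: "strict_mono r1" "convergent (\<lambda>n. S (x (r1 n)))" using seqcptD[OF S xB] by blast
  have "\<forall>n. norm (x (r1 n)) \<le> B" using xB by blast
  then obtain r2 where r2: "strict_mono r2" "convergent (\<lambda>n. T (x (r1 (r2 n))))" using seqcptD[OF T, of "\<lambda>n. x (r1 n)" B] by blast
  obtain a where a: "(\<lambda>n. S (x (r1 n))) \<longlonglongrightarrow> a" using r1(2) convergent_def by blast
  obtain b where b: "(\<lambda>n. T (x (r1 (r2 n)))) \<longlonglongrightarrow> b" using r2(2) convergent_def by blast
  have a2: "(\<lambda>n. S (x (r1 (r2 n)))) \<longlonglongrightarrow> a" using LIMSEQ_subseq_LIMSEQ[OF a r2(1)] by (simp add: comp_def)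
  have "(\<lambda>n. S (x (r1 (r2 n))) + T (x (r1 (r2 n)))) \<longlonglongrightarrow> a + b" by (intro tendsto_add a2 b)
  hence "convergent (\<lambda>n. S (x ((r1 \<circ> r2) n)) + T (x ((r1 \<circ> r2) n)))" unfolding convergent_def comp_def by blast
  moreover have "strict_mono (r1 \<circ> r2)" using r1(1) r2(1) by (rule strict_mono_o)
  ultimately show "\<exists>r. strict_mono r \<and> convergent (\<lambda>n. S (x (r n)) + T (x (r n)))" by blast
qed

lemma seqcpt_scale:
  assumes T: "seqcpt T"
  shows "seqcpt (\<lambda>x. c *\<^sub>C T x)"
  unfolding seqcpt_def
proof (intro allI impI)
  fix x :: "nat \<Rightarrow> 'a" and B :: real
  assume xB: "\<forall>n. norm (x n) \<le> B"
  obtain r where r: "strict_mono r" "convergent (\<lambda>n. T (x (r n)))" using seqcptD[OF T xB] by blast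
  obtain a where a: "(\<lambda>n. T (x (r n))) \<longlonglongrightarrow> a" using r(2) convergent_def by blast
  have "(\<lambda>n. c *\<^sub>C T (x (r n))) \<longlonglongrightarrow> c *\<^sub>C a" by (intro tendsto_scaleC_const a)
  hence "convergent (\<lambda>n. c *\<^sub>C T (x (r n)))" unfolding convergent_def by blast
  thus "\<exists>r. strict_mono r \<and> convergent (\<lambda>n. c *\<^sub>C T (x (r n)))" using r(1) by blast
qed

lemma seqcpt_adj:
  fixes R :: "'a::chilbert \<Rightarrow> 'a"
  assumes R: "bounded_clinear_op R" and cR: "seqcpt R"
  shows "seqcpt (adj UNIV R)"
  unfolding seqcpt_def
proof (intro allI impI)
  let ?A = "adj UNIV R"
  have A: "bounded_clinear_op ?A" by (rule adj_bop[OF R])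
  obtain K where K: "K > 0" "\<forall>x. norm (?A x) \<le> K * norm x" using bop_bound[OF A] by blast
  fix x :: "nat \<Rightarrow> 'a" and B :: real
  assume xB: "\<forall>n. norm (x n) \<le> B"
  have "\<forall>n. norm (?A (x n)) \<le> K * B" using K xB by (meson mult_left_mono less_imp_le order_trans)
  then obtain r where r: "strict_mono r" "convergent (\<lambda>n. R (?A (x (r n))))" using seqcptD[OF cR, of "\<lambda>n. ?A (x n)" "K * B"] by blast
  have cau: "Cauchy (\<lambda>n. R (?A (x (r n))))" using r(2) by (rule convergent_Cauchy)
  define B' where "B' = 2 * \<bar>B\<bar> + 1"
  have B'0: "B' > 0" by (simp add: B'_def)
  have key: "(norm (?A (x (r m)) - ?A (x (r n))))\<^sup>2 \<le> dist (R (?A (x (r m)))) (R (?A (x (r n)))) * B'" for m n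
  proof -
    define d where "d = x (r m) - x (r n)"
    have nd: "norm d \<le> B'" using xB norm_triangle_ineq4[of "x (r m)" "x (r n)"]
      unfolding d_def B'_def by (smt (verit) abs_ge_self)
    have "?A (x (r m)) - ?A (x (r n)) = ?A d" by (simp add: d_def bop_diff[OF A])
    hence "(norm (?A (x (r m)) - ?A (x (r n))))\<^sup>2 = cmod (cinner (?A d) (?A d))"
      by (simp only: cinner_self norm_of_real) simp
    also have "cinner (?A d) (?A d) = cinner (R (?A d)) d" by (simp add: adj_prop[OF R])
    also have "cmod \<dots> \<le> norm (R (?A d)) * norm d" by (rule cauchy_schwarz)
    also have "\<dots> \<le> norm (R (?A d)) * B'" using nd by (simp add: mult_left_mono)
    also have "R (?A d) = R (?A (x (r m))) - R (?A (x (r n)))" by (simp add: d_def bop_diff[OF A] bop_diff[OF R])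
    finally show ?thesis by (simp add: dist_norm)
  qed
  have "Cauchy (\<lambda>n. ?A (x (r n)))"
  proof (rule metric_CauchyI)
    fix e :: real assume e: "e > 0"
    have "e\<^sup>2 / B' > 0" using e B'0 by simp
    then obtain N where N: "\<forall>m\<ge>N. \<forall>n\<ge>N. dist (R (?A (x (r m)))) (R (?A (x (r n)))) < e\<^sup>2 / B'"
      using cau unfolding Cauchy_def by blast
    show "\<exists>N. \<forall>m\<ge>N. \<forall>n\<ge>N. dist (?A (x (r m))) (?A (x (r n))) < e"
    proof (intro exI allI impI)
      fix m n assume mn: "m \<ge> N" "n \<ge> N"
      have "(dist (?A (x (r m))) (?A (x (r n))))\<^sup>2 \<le> dist (R (?A (x (r m)))) (R (?A (x (r n)))) * B'"
        using key by (simp add: dist_norm)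
      also have "\<dots> < e\<^sup>2 / B' * B'" by (rule mult_strict_right_mono[OF N[rule_format, OF mn] B'0])
      also have "\<dots> = e\<^sup>2" using B'0 by simp
      finally show "dist (?A (x (r m))) (?A (x (r n))) < e" using e by (simp add: power_less_imp_less_base)
    qed
  qed
  hence "convergent (\<lambda>n. ?A (x (r n)))" by (rule Cauchy_convergent)
  thus "\<exists>r. strict_mono r \<and> convergent (\<lambda>n. ?A (x (r n)))" using r(1) by blast
qed



lemma sa_eigen:
  fixes T :: "'a::chilbert \<Rightarrow> 'a" and E :: "'a set"
  assumes T: "bounded_clinear_op T" and cT: "seqcpt T"
    and E: "csubspace E" "closed E" and ne: "v0 \<in> E" "v0 \<noteq> 0"
    and inv: "\<And>x. x \<in> E \<Longrightarrow> T x \<in> E"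
    and sa: "\<And>x y. x \<in> E \<Longrightarrow> y \<in> E \<Longrightarrow> cinner (T x) y = cinner x (T y)"
  shows "\<exists>v\<in>E. v \<noteq> 0 \<and> (\<exists>t. T v = t *\<^sub>C v)"
proof -
  obtain K where K: "K > 0" "\<forall>x. norm (T x) \<le> K * norm x" using bop_bound[OF T] by blast
  define U where "U = {x \<in> E. norm x \<le> 1}"
  define c where "c = Sup ((\<lambda>x. norm (T x)) ` U)"
  have U0: "0 \<in> U" using E(1) by (simp add: U_def csubspace_0)
  have Une: "(\<lambda>x. norm (T x)) ` U \<noteq> {}" using U0 by blast
  have bdd: "bdd_above ((\<lambda>x. norm (T x)) ` U)"
  proof (rule bdd_aboveI[of _ K])
    fix r assume "r \<in> (\<lambda>x. norm (T x)) ` U"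
    then obtain x where x: "x \<in> U" "r = norm (T x)" by blast
    have "norm (T x) \<le> K * norm x" using K by blast
    also have "\<dots> \<le> K * 1" using x(1) K(1) by (intro mult_left_mono) (auto simp: U_def)
    finally show "r \<le> K" using x(2) by simp
  qed
  have le_c: "norm (T x) \<le> c" if "x \<in> U" for x
    unfolding c_def using bdd that by (intro cSup_upper) auto
  have c0: "0 \<le> c" using le_c[OF U0] by (meson norm_ge_zero order_trans)
  have Tc: "norm (T x) \<le> c * norm x" if xE: "x \<in> E" for x
  proof (cases "x = 0")
    case True thus ?thesis by (simp add: bop_zero[OF T])
  next
    case False
    hence nx: "norm x > 0" by simp
    define u where "u = complex_of_real (1 / norm x) *\<^sub>C x"
    have "norm u = 1" using nx by (simp add: u_def norm_scaleC norm_divide)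
    hence "u \<in> U" using xE E(1) by (simp add: U_def u_def csubspace_scale)
    hence "norm (T u) \<le> c" by (rule le_c)
    moreover have "norm (T u) = norm (T x) / norm x" using nx by (simp add: u_def bop_scale[OF T] norm_scaleC norm_divide)
    ultimately show ?thesis using nx by (simp add: divide_le_eq mult.commute)
  qed
  show ?thesis
  proof (cases "c = 0")
    case True
    have "norm (T v0) \<le> 0" using Tc[OF ne(1)] True by simp
    hence "T v0 = 0 *\<^sub>C v0" by simp
    thus ?thesis using ne by blast
  next
    case False
    hence cpos: "c > 0" using c0 by simp
    define e :: "nat \<Rightarrow> real" where "e n = 1 / (real n + 1)" for n
    have "\<forall>n. \<exists>x. x \<in> U \<and> c - e n < norm (T x)"
    proof
      fix n :: nat
      have "c - e n < Sup ((\<lambda>x. norm (T x)) ` U)" by (simp add: e_def c_def[symmetric])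
      then obtain r where "r \<in> (\<lambda>x. norm (T x)) ` U" "c - e n < r" using less_cSupD[OF Une] by blast
      thus "\<exists>x. x \<in> U \<and> c - e n < norm (T x)" by blast
    qed
    then obtain xs where xsU: "\<And>n. xs n \<in> U" and xsc: "\<And>n. c - e n < norm (T (xs n))"
      by (auto simp: choice_iff)
    have xsE: "xs n \<in> E" and xs1: "norm (xs n) \<le> 1" for n using xsU[of n] by (auto simp: U_def)
    have Txs_le: "norm (T (xs n)) \<le> c" for n using le_c[OF xsU] .
    define g where "g n = T (T (xs n)) - complex_of_real (c\<^sup>2) *\<^sub>C xs n" for n
    have g_bound: "(norm (g n))\<^sup>2 \<le> c\<^sup>2 * (c\<^sup>2 - (norm (T (xs n)))\<^sup>2)" for n
    proof -
      have h1: "norm (T (T (xs n))) \<le> c * norm (T (xs n))" using Tc inv xsE by blast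
      have h1': "(norm (T (T (xs n))))\<^sup>2 \<le> c\<^sup>2 * (norm (T (xs n)))\<^sup>2"
        using power_mono[OF h1, of 2] by (simp add: power_mult_distrib)
      have h2: "cinner (T (T (xs n))) (xs n) = cinner (T (xs n)) (T (xs n))" using sa inv xsE by blast
      have h3: "(norm (xs n))\<^sup>2 \<le> 1" using xs1[of n] by (simp add: power_le_one)
      have "(norm (g n))\<^sup>2 = (norm (T (T (xs n))))\<^sup>2 - 2 * Re (cnj (complex_of_real (c\<^sup>2)) * cinner (T (T (xs n))) (xs n))
          + (cmod (complex_of_real (c\<^sup>2)))\<^sup>2 * (norm (xs n))\<^sup>2"
        unfolding g_def by (rule norm_diff_sq)
      also have "Re (cnj (complex_of_real (c\<^sup>2)) * cinner (T (T (xs n))) (xs n)) = c\<^sup>2 * (norm (T (xs n)))\<^sup>2"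
        unfolding h2 cinner_self by simp
      also have "(cmod (complex_of_real (c\<^sup>2)))\<^sup>2 = c\<^sup>2 * c\<^sup>2" by (simp only: norm_of_real abs_power2) (simp add: power2_eq_square)
      finally have "(norm (g n))\<^sup>2 = (norm (T (T (xs n))))\<^sup>2 - 2 * (c\<^sup>2 * (norm (T (xs n)))\<^sup>2) + c\<^sup>2 * c\<^sup>2 * (norm (xs n))\<^sup>2" .
      moreover have "c\<^sup>2 * c\<^sup>2 * (norm (xs n))\<^sup>2 \<le> c\<^sup>2 * c\<^sup>2" using h3 by (simp add: mult_left_le)
      ultimately show ?thesis using h1' by (simp add: algebra_simps)
    qed
    have "e = (\<lambda>n. inverse (real (Suc n)))" by (auto simp: e_def inverse_eq_divide add.commute)
    hence e_lim: "e \<longlonglongrightarrow> 0" using LIMSEQ_inverse_real_of_nat by simp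
    have a_lim: "(\<lambda>n. norm (T (xs n))) \<longlonglongrightarrow> c"
    proof (rule tendsto_sandwich[of "\<lambda>n. c - e n" _ _ "\<lambda>n. c"])
      show "\<forall>\<^sub>F n in sequentially. c - e n \<le> norm (T (xs n))" using xsc less_imp_le by (intro always_eventually) blast
      show "\<forall>\<^sub>F n in sequentially. norm (T (xs n)) \<le> c" using Txs_le by (intro always_eventually) blast
      show "(\<lambda>n. c - e n) \<longlonglongrightarrow> c" using tendsto_diff[OF tendsto_const e_lim, of c] by simp
    qed simp
    have "(\<lambda>n. c\<^sup>2 * (c\<^sup>2 - (norm (T (xs n)))\<^sup>2)) \<longlonglongrightarrow> c\<^sup>2 * (c\<^sup>2 - c\<^sup>2)"
      by (intro tendsto_intros a_lim)
    hence b_lim: "(\<lambda>n. c\<^sup>2 * (c\<^sup>2 - (norm (T (xs n)))\<^sup>2)) \<longlonglongrightarrow> 0" by simp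
    have "(\<lambda>n. (norm (g n))\<^sup>2) \<longlonglongrightarrow> 0"
      by (rule tendsto_sandwich[of "\<lambda>n. 0" _ _ "\<lambda>n. c\<^sup>2 * (c\<^sup>2 - (norm (T (xs n)))\<^sup>2)"])
         (use g_bound b_lim in \<open>auto intro: always_eventually\<close>)
    hence "(\<lambda>n. sqrt ((norm (g n))\<^sup>2)) \<longlonglongrightarrow> sqrt 0" by (rule tendsto_real_sqrt)
    hence "(\<lambda>n. norm (g n)) \<longlonglongrightarrow> 0" by simp
    hence g_lim: "g \<longlonglongrightarrow> 0" by (simp add: tendsto_norm_zero_iff)
    obtain r where r: "strict_mono r" "convergent (\<lambda>n. T (xs (r n)))"
      using seqcptD[OF cT, of xs 1] xs1 by blast
    obtain y where y: "(\<lambda>n. T (xs (r n))) \<longlonglongrightarrow> y" using r(2) convergent_def by blast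
    have TTy: "(\<lambda>n. T (T (xs (r n)))) \<longlonglongrightarrow> T y" by (rule bop_tendsto[OF T y])
    have gr: "(\<lambda>n. g (r n)) \<longlonglongrightarrow> 0" using LIMSEQ_subseq_LIMSEQ[OF g_lim r(1)] by (simp add: comp_def)
    have "(\<lambda>n. T (T (xs (r n))) - g (r n)) \<longlonglongrightarrow> T y - 0" by (intro tendsto_diff TTy gr)
    moreover have "T (T (xs (r n))) - g (r n) = complex_of_real (c\<^sup>2) *\<^sub>C xs (r n)" for n by (simp add: g_def)
    ultimately have cxs: "(\<lambda>n. complex_of_real (c\<^sup>2) *\<^sub>C xs (r n)) \<longlonglongrightarrow> T y" by simp
    define v where "v = complex_of_real (1 / c\<^sup>2) *\<^sub>C T y"
    have cc1: "complex_of_real (1 / c\<^sup>2) * complex_of_real (c\<^sup>2) = 1" using cpos by simp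
    have cc2: "complex_of_real (c\<^sup>2) * complex_of_real (1 / c\<^sup>2) = 1" using cpos by simp
    have inv_c: "complex_of_real (1 / c\<^sup>2) *\<^sub>C (complex_of_real (c\<^sup>2) *\<^sub>C z) = z" for z :: 'a
      by (simp only: scaleC_scaleC cc1 scaleC_one)
    have xs_lim: "(\<lambda>n. xs (r n)) \<longlonglongrightarrow> v"
      using tendsto_scaleC_const[OF cxs, of "complex_of_real (1 / c\<^sup>2)"] unfolding v_def by (simp only: inv_c)
    have vE: "v \<in> E" using closed_sequentially[OF E(2) _ xs_lim] xsE by blast
    have "(\<lambda>n. T (xs (r n))) \<longlonglongrightarrow> T v" by (rule bop_tendsto[OF T xs_lim])
    hence Tv: "T v = y" using y LIMSEQ_unique by blast
    have "(\<lambda>n. norm (T (xs (r n)))) \<longlonglongrightarrow> norm y" by (intro tendsto_norm y)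
    moreover have "(\<lambda>n. norm (T (xs (r n)))) \<longlonglongrightarrow> c" using LIMSEQ_subseq_LIMSEQ[OF a_lim r(1)] by (simp add: comp_def)
    ultimately have "norm y = c" using LIMSEQ_unique by blast
    hence y0: "y \<noteq> 0" using cpos by auto
    hence v0: "v \<noteq> 0" using Tv bop_zero[OF T] by auto
    have cv: "complex_of_real (c\<^sup>2) *\<^sub>C v = T y"
      unfolding v_def by (simp only: scaleC_scaleC cc2 scaleC_one)
    define w where "w = T v + complex_of_real c *\<^sub>C v"
    show ?thesis
    proof (cases "w = 0")
      case True
      hence "T v = (- complex_of_real c) *\<^sub>C v" by (simp add: w_def scaleC_minus_left eq_neg_iff_add_eq_0)
      thus ?thesis using vE v0 by blast
    next
      case False
      have wE: "w \<in> E" using vE inv E(1) by (simp add: w_def csubspace_add csubspace_scale)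
      have "T w = T (T v) + complex_of_real c *\<^sub>C T v" by (simp add: w_def bop_add[OF T] bop_scale[OF T])
      also have "T (T v) = complex_of_real c *\<^sub>C (complex_of_real c *\<^sub>C v)"
        using cv Tv by (simp add: scaleC_scaleC power2_eq_square)
      also have "complex_of_real c *\<^sub>C (complex_of_real c *\<^sub>C v) + complex_of_real c *\<^sub>C T v = complex_of_real c *\<^sub>C w"
        by (simp add: w_def scaleC_add_right add.commute)
      finally show ?thesis using wE False by blast
    qed
  qed
qed

lemma clin_add: "clinear_on S T \<Longrightarrow> x \<in> S \<Longrightarrow> y \<in> S \<Longrightarrow> T (x + y) = T x + T y"
  by (simp add: clinear_on_def)
lemma clin_scale: "clinear_on S T \<Longrightarrow> x \<in> S \<Longrightarrow> T (c *\<^sub>C x) = c *\<^sub>C T x"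
  by (simp add: clinear_on_def)
lemma clin_sub: "clinear_on S T \<Longrightarrow> csubspace S" by (simp add: clinear_on_def)
lemma clin_zero: "clinear_on S T \<Longrightarrow> T 0 = 0"
proof -
  assume a: "clinear_on S T"
  have z: "0 \<in> S" using clin_sub[OF a] by (simp add: csubspace_def)
  have "T 0 = T (0 *\<^sub>C 0)" by simp
  also have "\<dots> = 0 *\<^sub>C T 0" by (rule clin_scale[OF a z])
  finally show ?thesis by simp
qed
lemma clin_minus: "clinear_on S T \<Longrightarrow> x \<in> S \<Longrightarrow> T (- x) = - T x"
proof -
  assume a: "clinear_on S T" and x: "x \<in> S"
  have "T (- x) = T ((-1) *\<^sub>C x)" by (simp only: scaleC_minus1)
  also have "\<dots> = (-1) *\<^sub>C T x" by (rule clin_scale[OF a x])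
  finally show ?thesis by (simp only: scaleC_minus1)
qed
lemma clin_diff: "clinear_on S T \<Longrightarrow> x \<in> S \<Longrightarrow> y \<in> S \<Longrightarrow> T (x - y) = T x - T y"
proof -
  assume a: "clinear_on S T" and x: "x \<in> S" and y: "y \<in> S"
  have my: "- y \<in> S" using csubspace_minus[OF clin_sub[OF a] y] .
  show ?thesis by (simp only: diff_conv_add_uminus clin_add[OF a x my] clin_minus[OF a y])
qed

locale adm =
  fixes domD :: "'h::chilbert set" and D V :: "'h \<Rightarrow> 'h" and \<phi>0 :: 'h
  assumes adm: "admissible domD D V"
    and phi0: "\<phi>0 \<in> domD" "D \<phi>0 = 0" "\<phi>0 \<noteq> 0"
begin

lemma Dlin: "clinear_on domD D" using adm by (simp add: admissible_def)
lemma domD_sub: "csubspace domD" using clin_sub[OF Dlin] .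
lemma domD_dense: "op_dense cinner UNIV domD" using adm by (simp add: admissible_def)
lemma Vcpt: "compact_op V" using adm by (simp add: admissible_def)
lemma Vb: "bounded_clinear_op V" using Vcpt by (simp add: compact_op_def)
lemma Vspec: "bspectrum V = {0}" using adm by (simp add: admissible_def)
lemma Vdom: "V x \<in> domD" using adm by (auto simp: admissible_def)
lemma DV: "D (V x) = x" using adm by (simp add: admissible_def)
lemma kerD: "\<exists>\<phi>. \<phi> \<noteq> 0 \<and> {x\<in>domD. D x = 0} = range (\<lambda>c. c *\<^sub>C \<phi>)" using adm by (simp add: admissible_def)
lemma SA: "\<exists>S. S \<subseteq> domD \<and> self_adjoint_op S D \<and> has_compact_resolvent S D"
  using adm by (simp add: admissible_def)

lemma Dadd: "x \<in> domD \<Longrightarrow> y \<in> domD \<Longrightarrow> D (x + y) = D x + D y" by (rule clin_add[OF Dlin])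
lemma Dscale: "x \<in> domD \<Longrightarrow> D (c *\<^sub>C x) = c *\<^sub>C D x" by (rule clin_scale[OF Dlin])
lemma Ddiff: "x \<in> domD \<Longrightarrow> y \<in> domD \<Longrightarrow> D (x - y) = D x - D y" by (rule clin_diff[OF Dlin])
lemma D0: "D 0 = 0" by (rule clin_zero[OF Dlin])

lemma inv_IV: "\<exists>S. bounded_clinear_op S \<and> (\<forall>w. S w - \<mu> *\<^sub>C V (S w) = w) \<and> (\<forall>x. S (x - \<mu> *\<^sub>C V x) = x)"
proof (cases "\<mu> = 0")
  case True
  have "bounded_clinear_op (\<lambda>x::'h. x)"
    unfolding bounded_clinear_op_def clinear_on_def csubspace_def by (auto intro!: exI[of _ 1])
  thus ?thesis using True by (intro exI[of _ "\<lambda>x. x"]) simp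
next
  case False
  have "1 / \<mu> \<notin> bspectrum V" using Vspec False by simp
  then obtain R where R: "bounded_clinear_op R" "\<forall>x. R (V x - (1 / \<mu>) *\<^sub>C x) = x"
      "\<forall>y. V (R y) - (1 / \<mu>) *\<^sub>C R y = y"
    unfolding bspectrum_def by blast
  define S where "S w = R ((- 1 / \<mu>) *\<^sub>C w)" for w
  have Sb: "bounded_clinear_op S"
  proof -
    obtain K where K: "\<forall>x. norm (R x) \<le> K * norm x" using R(1) by (auto simp: bounded_clinear_op_def)
    have "norm (S x) \<le> (K * cmod (- 1 / \<mu>)) * norm x" for x
      using K[rule_format, of "(- 1 / \<mu>) *\<^sub>C x"] by (simp add: S_def norm_scaleC mult.assoc)
    moreover have "clinear_on UNIV S"
      unfolding clinear_on_def csubspace_def S_def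
      by (simp add: scaleC_add_right bop_add[OF R(1)] bop_scale[OF R(1)] scaleC_scaleC mult.commute)
    ultimately show ?thesis unfolding bounded_clinear_op_def by blast
  qed
  have s1: "S w - \<mu> *\<^sub>C V (S w) = w" for w
  proof -
    have "S w - \<mu> *\<^sub>C V (S w) = (- \<mu>) *\<^sub>C (V (S w) - (1 / \<mu>) *\<^sub>C S w)"
      using False by (simp add: scaleC_diff_right scaleC_scaleC scaleC_minus_left scaleC_one)
    also have "\<dots> = (- \<mu>) *\<^sub>C ((- 1 / \<mu>) *\<^sub>C w)" using R(3) by (simp add: S_def)
    also have "\<dots> = w" using False by (simp add: scaleC_scaleC scaleC_one)
    finally show ?thesis .
  qed
  have s2: "S (x - \<mu> *\<^sub>C V x) = x" for x
  proof -
    have "(- 1 / \<mu>) *\<^sub>C (x - \<mu> *\<^sub>C V x) = V x - (1 / \<mu>) *\<^sub>C x"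
      using False by (simp add: scaleC_diff_right scaleC_scaleC scaleC_minus_left scaleC_one)
    thus ?thesis using R(2) by (simp add: S_def)
  qed
  show ?thesis using Sb s1 s2 by blast
qed

lemma phi_eq: "phi V \<phi>0 \<mu> - \<mu> *\<^sub>C V (phi V \<phi>0 \<mu>) = \<phi>0"
proof -
  obtain S where S: "bounded_clinear_op S" "\<forall>w. S w - \<mu> *\<^sub>C V (S w) = w" "\<forall>x. S (x - \<mu> *\<^sub>C V x) = x"
    using inv_IV by blast
  have "(THE y. y - \<mu> *\<^sub>C V y = \<phi>0) = S \<phi>0"
  proof (rule the_equality)
    show "S \<phi>0 - \<mu> *\<^sub>C V (S \<phi>0) = \<phi>0" using S(2) by blast
    fix y assume "y - \<mu> *\<^sub>C V y = \<phi>0"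
    thus "y = S \<phi>0" using S(3) by metis
  qed
  thus ?thesis using S(2) by (simp add: phi_def)
qed

lemma IV_inj: "x - \<mu> *\<^sub>C V x = y - \<mu> *\<^sub>C V y \<Longrightarrow> x = y"
proof -
  obtain S where S: "\<forall>x. S (x - \<mu> *\<^sub>C V x) = x" using inv_IV by blast
  assume "x - \<mu> *\<^sub>C V x = y - \<mu> *\<^sub>C V y"
  hence "S (x - \<mu> *\<^sub>C V x) = S (y - \<mu> *\<^sub>C V y)" by simp
  thus "x = y" using S by simp
qed

lemma phi_unique: "y - \<mu> *\<^sub>C V y = \<phi>0 \<Longrightarrow> y = phi V \<phi>0 \<mu>"
  using IV_inj phi_eq by metis

lemma phi_zero: "phi V \<phi>0 0 = \<phi>0"
  using phi_unique[of \<phi>0 0] by simp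

lemma phi_nonzero: "phi V \<phi>0 \<mu> \<noteq> 0"
proof
  assume "phi V \<phi>0 \<mu> = 0"
  hence "\<phi>0 = 0" using phi_eq[of \<mu>] by (simp add: bop_zero[OF Vb])
  thus False using phi0(3) by simp
qed

lemma phi_dom: "phi V \<phi>0 \<mu> \<in> domD" and phi_D: "D (phi V \<phi>0 \<mu>) = \<mu> *\<^sub>C phi V \<phi>0 \<mu>"
proof -
  let ?p = "phi V \<phi>0 \<mu>"
  have pe: "?p = \<phi>0 + \<mu> *\<^sub>C V ?p" using phi_eq[of \<mu>] by (simp add: algebra_simps)
  have v: "\<mu> *\<^sub>C V ?p \<in> domD" using domD_sub Vdom by (simp add: csubspace_scale)
  show "?p \<in> domD" using pe csubspace_add[OF domD_sub phi0(1) v] by simp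
  have "D ?p = D \<phi>0 + D (\<mu> *\<^sub>C V ?p)" by (subst pe) (rule Dadd[OF phi0(1) v])
  also have "\<dots> = \<mu> *\<^sub>C ?p" using phi0(2) by (simp add: Dscale[OF Vdom] DV)
  finally show "D ?p = \<mu> *\<^sub>C ?p" .
qed

lemma ker_char:
  assumes y: "y \<in> domD" and Dy: "D y = \<nu> *\<^sub>C y"
  shows "\<exists>k. y = k *\<^sub>C phi V \<phi>0 \<nu>"
proof -
  obtain \<phi> where \<phi>: "\<phi> \<noteq> 0" "{x\<in>domD. D x = 0} = range (\<lambda>c. c *\<^sub>C \<phi>)" using kerD by blast
  have "\<phi>0 \<in> range (\<lambda>c. c *\<^sub>C \<phi>)" using \<phi>(2) phi0 by blast
  then obtain c0 where c0: "\<phi>0 = c0 *\<^sub>C \<phi>" by blast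
  have c00: "c0 \<noteq> 0" using c0 phi0(3) by auto
  define u where "u = y - \<nu> *\<^sub>C V y"
  have vd: "\<nu> *\<^sub>C V y \<in> domD" using domD_sub Vdom by (simp add: csubspace_scale)
  have udom: "u \<in> domD" unfolding u_def using csubspace_diff[OF domD_sub y vd] .
  have "D u = D y - D (\<nu> *\<^sub>C V y)" unfolding u_def by (rule Ddiff[OF y vd])
  also have "\<dots> = 0" using Dy by (simp add: Dscale[OF Vdom] DV)
  finally have "u \<in> range (\<lambda>c. c *\<^sub>C \<phi>)" using \<phi>(2) udom by blast
  then obtain c where c: "u = c *\<^sub>C \<phi>" by blast
  define k where "k = c / c0"
  have "u = k *\<^sub>C \<phi>0" using c00 by (simp add: c c0 k_def scaleC_scaleC)
  also have "\<dots> = k *\<^sub>C (phi V \<phi>0 \<nu> - \<nu> *\<^sub>C V (phi V \<phi>0 \<nu>))" by (simp add: phi_eq)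
  also have "\<dots> = k *\<^sub>C phi V \<phi>0 \<nu> - \<nu> *\<^sub>C V (k *\<^sub>C phi V \<phi>0 \<nu>)"
    by (simp add: scaleC_diff_right bop_scale[OF Vb] scaleC_scaleC mult.commute)
  finally have "y - \<nu> *\<^sub>C V y = k *\<^sub>C phi V \<phi>0 \<nu> - \<nu> *\<^sub>C V (k *\<^sub>C phi V \<phi>0 \<nu>)" by (simp add: u_def)
  hence "y = k *\<^sub>C phi V \<phi>0 \<nu>" by (rule IV_inj)
  thus ?thesis by blast
qed

end

context adm begin

lemma phi_isCont: "isCont (phi V \<phi>0) \<mu>0"
proof -
  obtain S where S: "bounded_clinear_op S" "\<forall>x. S (x - \<mu>0 *\<^sub>C V x) = x" using inv_IV by blast
  obtain CS where CS: "CS > 0" "\<forall>x. norm (S x) \<le> CS * norm x" using bop_bound[OF S(1)] by blast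
  obtain KV where KV: "KV > 0" "\<forall>x. norm (V x) \<le> KV * norm x" using bop_bound[OF Vb] by blast
  have Sinv: "norm x \<le> CS * norm (x - \<mu>0 *\<^sub>C V x)" for x using CS(2) S(2) by metis
  define p where "p = phi V \<phi>0 \<mu>0"
  define \<delta> where "\<delta> = 1 / (2 * CS * KV)"
  have \<delta>0: "\<delta> > 0" using CS KV by (simp add: \<delta>_def)
  have bound: "norm (phi V \<phi>0 l - p) \<le> 2 * CS * KV * norm p * cmod (l - \<mu>0)" if l: "cmod (l - \<mu>0) < \<delta>" for l
  proof -
    define q where "q = phi V \<phi>0 l"
    define d where "d = q - p"
    have "d - \<mu>0 *\<^sub>C V d = (q - \<mu>0 *\<^sub>C V q) - (p - \<mu>0 *\<^sub>C V p)"
      by (simp add: d_def bop_diff[OF Vb] scaleC_diff_right algebra_simps)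
    also have "p - \<mu>0 *\<^sub>C V p = q - l *\<^sub>C V q" by (simp add: p_def q_def phi_eq)
    also have "(q - \<mu>0 *\<^sub>C V q) - (q - l *\<^sub>C V q) = (l - \<mu>0) *\<^sub>C V q" by (simp add: scaleC_diff_left algebra_simps)
    finally have e: "d - \<mu>0 *\<^sub>C V d = (l - \<mu>0) *\<^sub>C V q" .
    define a where "a = CS * KV * cmod (l - \<mu>0)"
    have a0: "0 \<le> a" using CS KV by (simp add: a_def)
    have a1: "a \<le> 1 / 2"
    proof -
      have "a < CS * KV * \<delta>" using l CS KV by (simp add: a_def)
      also have "\<dots> = 1 / 2" using CS KV by (simp add: \<delta>_def)
      finally show ?thesis by simp
    qed
    have "norm d \<le> CS * norm ((l - \<mu>0) *\<^sub>C V q)" using Sinv[of d] e by simp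
    also have "\<dots> = CS * cmod (l - \<mu>0) * norm (V q)" by (simp add: norm_scaleC)
    also have "\<dots> \<le> CS * cmod (l - \<mu>0) * (KV * norm q)" using KV CS by (simp add: mult_left_mono)
    also have "\<dots> = a * norm q" by (simp add: a_def)
    also have "\<dots> \<le> a * (norm p + norm d)"
      using a0 norm_triangle_ineq[of p d] by (intro mult_left_mono) (auto simp: d_def)
    finally have h: "norm d \<le> a * norm p + a * norm d" by (simp add: algebra_simps)
    have "a * norm d \<le> (1/2) * norm d" using a1 by (intro mult_right_mono) auto
    hence "norm d \<le> 2 * a * norm p" using h by simp
    thus ?thesis by (simp add: d_def q_def a_def mult_ac)
  qed
  have lim0: "((\<lambda>l. cmod (l - \<mu>0)) \<longlongrightarrow> 0) (at \<mu>0)"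
    using tendsto_norm[OF tendsto_diff[OF tendsto_ident_at[of \<mu>0 UNIV] tendsto_const[of \<mu>0]]] by simp
  have ev: "\<forall>\<^sub>F l in at \<mu>0. cmod (l - \<mu>0) < \<delta>" using order_tendstoD(2)[OF lim0 \<delta>0] .
  have "((\<lambda>l. phi V \<phi>0 l - p) \<longlongrightarrow> 0) (at \<mu>0)"
  proof (rule Lim_null_comparison)
    show "\<forall>\<^sub>F l in at \<mu>0. norm (phi V \<phi>0 l - p) \<le> 2 * CS * KV * norm p * cmod (l - \<mu>0)"
      using ev by (rule eventually_mono) (rule bound)
    show "((\<lambda>l. 2 * CS * KV * norm p * cmod (l - \<mu>0)) \<longlongrightarrow> 0) (at \<mu>0)"
      using tendsto_mult_left[OF lim0, of "2 * CS * KV * norm p"] by simp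
  qed
  thus ?thesis unfolding isCont_def p_def by (simp add: LIM_zero_iff)
qed

lemma gft_apply: "gft V \<phi>0 x \<mu> = cinner x (phi V \<phi>0 (cnj \<mu>))" by (simp add: gft_def)

lemma gft_isCont: "isCont (gft V \<phi>0 x) \<mu>0"
proof -
  have c: "((\<lambda>\<mu>. cnj \<mu>) \<longlongrightarrow> cnj \<mu>0) (at \<mu>0)" by (intro tendsto_intros)
  have "((\<lambda>\<mu>. phi V \<phi>0 (cnj \<mu>)) \<longlongrightarrow> phi V \<phi>0 (cnj \<mu>0)) (at \<mu>0)"
    by (rule isCont_tendsto_compose[OF phi_isCont c])
  hence "((\<lambda>\<mu>. cinner x (phi V \<phi>0 (cnj \<mu>))) \<longlongrightarrow> cinner x (phi V \<phi>0 (cnj \<mu>0))) (at \<mu>0)"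
    by (intro tendsto_cinner tendsto_const)
  thus ?thesis unfolding isCont_def gft_def .
qed

lemma gft_add: "gft V \<phi>0 (a + b) = gft V \<phi>0 a + gft V \<phi>0 b"
  by (rule ext) (simp add: gft_def cinner_add_left)
lemma gft_scale: "gft V \<phi>0 (c *\<^sub>C a) = (\<lambda>\<mu>. c * gft V \<phi>0 a \<mu>)"
  by (rule ext) (simp add: gft_def cinner_scaleC_left)
lemma gft_diff: "gft V \<phi>0 (a - b) = gft V \<phi>0 a - gft V \<phi>0 b"
  by (rule ext) (simp add: gft_def cinner_diff_left)
lemma gft_zero: "gft V \<phi>0 x 0 = cinner x \<phi>0" by (simp add: gft_def phi_zero)

lemma gft_Vadj: "gft V \<phi>0 (adj UNIV V x) \<mu> = cinner x (V (phi V \<phi>0 (cnj \<mu>)))"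
proof -
  have "cinner (adj UNIV V x) (phi V \<phi>0 (cnj \<mu>)) = cnj (cinner (phi V \<phi>0 (cnj \<mu>)) (adj UNIV V x))"
    by (rule cinner_commute)
  also have "\<dots> = cnj (cinner (V (phi V \<phi>0 (cnj \<mu>))) x)" by (simp add: adj_prop[OF Vb])
  also have "\<dots> = cinner x (V (phi V \<phi>0 (cnj \<mu>)))" by (simp add: cinner_commute[of x])
  finally show ?thesis by (simp add: gft_def)
qed

lemma dq: "\<mu> \<noteq> 0 \<Longrightarrow> (gft V \<phi>0 x \<mu> - gft V \<phi>0 x 0) / \<mu> = cinner x (V (phi V \<phi>0 (cnj \<mu>)))"
proof -
  assume m: "\<mu> \<noteq> 0"
  let ?p = "phi V \<phi>0 (cnj \<mu>)"
  have h: "cnj \<mu> *\<^sub>C V ?p = ?p - \<phi>0" using phi_eq[of "cnj \<mu>"] by (simp add: algebra_simps)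
  have "V ?p = (1 / cnj \<mu>) *\<^sub>C (cnj \<mu> *\<^sub>C V ?p)" using m by (simp add: scaleC_scaleC scaleC_one)
  also have "\<dots> = (1 / cnj \<mu>) *\<^sub>C (?p - \<phi>0)" by (simp only: h)
  finally have "V ?p = (1 / cnj \<mu>) *\<^sub>C (?p - \<phi>0)" .
  hence "cinner x (V ?p) = (1 / \<mu>) * (cinner x ?p - cinner x \<phi>0)"
    by (simp add: cinner_scaleC_right cinner_diff_right)
  thus ?thesis by (simp add: gft_def phi_zero divide_inverse mult.commute)
qed

lemma part1: "gft V \<phi>0 (adj UNIV V x) = backward_shift (gft V \<phi>0 x)"
proof (rule ext)
  fix \<mu>
  let ?g = "gft V \<phi>0 x"
  show "gft V \<phi>0 (adj UNIV V x) \<mu> = backward_shift ?g \<mu>"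
  proof (cases "\<mu> = 0")
    case False
    thus ?thesis by (simp add: backward_shift_def gft_Vadj dq)
  next
    case True
    have lim: "((\<lambda>y. cinner x (V (phi V \<phi>0 (cnj y)))) \<longlongrightarrow> cinner x (V (phi V \<phi>0 (cnj 0)))) (at 0)"
    proof -
      have c: "((\<lambda>\<mu>. cnj \<mu>) \<longlongrightarrow> cnj 0) (at (0::complex))" by (intro tendsto_intros)
      have "((\<lambda>\<mu>. phi V \<phi>0 (cnj \<mu>)) \<longlongrightarrow> phi V \<phi>0 (cnj 0)) (at 0)"
        by (rule isCont_tendsto_compose[OF phi_isCont c])
      thus ?thesis by (intro tendsto_cinner tendsto_const bop_tendsto[OF Vb])
    qed
    have "((\<lambda>y. (?g y - ?g 0) / (y - 0)) \<longlongrightarrow> cinner x (V (phi V \<phi>0 (cnj 0)))) (at 0)"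
    proof (rule Lim_transform_eventually[OF lim])
      show "\<forall>\<^sub>F y in at 0. cinner x (V (phi V \<phi>0 (cnj y))) = (?g y - ?g 0) / (y - 0)"
        by (rule eventually_mono[OF eventually_at_filter[THEN iffD2]]) (auto simp: dq intro!: always_eventually)
    qed
    hence "(?g has_field_derivative cinner x (V (phi V \<phi>0 (cnj 0)))) (at 0)"
      by (simp add: has_field_derivative_iff)
    hence "deriv ?g 0 = cinner x (V (phi V \<phi>0 (cnj 0)))" by (rule DERIV_imp_deriv)
    thus ?thesis using True by (simp add: backward_shift_def gft_Vadj)
  qed
qed

lemma part2:
  assumes x: "x \<in> adj_dom domD D"
  shows "gft V \<phi>0 x \<in> Mz_dom V \<phi>0 \<and> gft V \<phi>0 (adj domD D x) = Mz (gft V \<phi>0 x)"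
proof -
  obtain z where z: "\<forall>y\<in>domD. cinner (D y) x = cinner y z" using x by (auto simp: adj_dom_def)
  have az: "adj domD D x = z" by (rule adj_eqI[OF domD_dense z])
  have gz: "gft V \<phi>0 z = Mz (gft V \<phi>0 x)"
  proof (rule ext)
    fix \<mu>
    let ?p = "phi V \<phi>0 (cnj \<mu>)"
    have "cinner z ?p = cnj (cinner ?p z)" by (rule cinner_commute)
    also have "cinner ?p z = cinner (D ?p) x" using z phi_dom by simp
    also have "\<dots> = cnj \<mu> * cinner ?p x" by (simp add: phi_D cinner_scaleC_left)
    also have "cnj (cnj \<mu> * cinner ?p x) = \<mu> * cinner x ?p" by (simp add: cinner_commute[of x])
    finally show "gft V \<phi>0 z \<mu> = Mz (gft V \<phi>0 x) \<mu>" by (simp add: gft_def Mz_def)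
  qed
  have "gft V \<phi>0 x \<in> Mz_dom V \<phi>0"
    unfolding Mz_dom_def WH_def using gz by (auto simp: Mz_def intro: range_eqI[of _ _ z])
  thus ?thesis using az gz by simp
qed

end

lemma bop_comb:
  fixes S T :: "'a::complex_inner \<Rightarrow> 'a"
  assumes S: "bounded_clinear_op S" and T: "bounded_clinear_op T"
  shows "bounded_clinear_op (\<lambda>x. a *\<^sub>C (S x + b *\<^sub>C T x))"
proof -
  obtain KS where KS: "KS > 0" "\<forall>x. norm (S x) \<le> KS * norm x" using bop_bound[OF S] by blast
  obtain KT where KT: "KT > 0" "\<forall>x. norm (T x) \<le> KT * norm x" using bop_bound[OF T] by blast
  have lin: "clinear_on UNIV (\<lambda>x. a *\<^sub>C (S x + b *\<^sub>C T x))"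
    unfolding clinear_on_def csubspace_def
    by (simp add: bop_add[OF S] bop_add[OF T] bop_scale[OF S] bop_scale[OF T] scaleC_add_right scaleC_scaleC
        algebra_simps)
  have "norm (a *\<^sub>C (S x + b *\<^sub>C T x)) \<le> (cmod a * (KS + cmod b * KT)) * norm x" for x
  proof -
    have "norm (a *\<^sub>C (S x + b *\<^sub>C T x)) = cmod a * norm (S x + b *\<^sub>C T x)" by (simp add: norm_scaleC)
    also have "\<dots> \<le> cmod a * (norm (S x) + cmod b * norm (T x))"
      using norm_triangle_ineq[of "S x" "b *\<^sub>C T x"] by (intro mult_left_mono) (auto simp: norm_scaleC)
    also have "\<dots> \<le> cmod a * (KS * norm x + cmod b * (KT * norm x))"
      using KS KT by (intro mult_left_mono add_mono) (auto intro: mult_left_mono)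
    finally show ?thesis by (simp add: algebra_simps)
  qed
  thus ?thesis using lin unfolding bounded_clinear_op_def by blast
qed

context adm begin

definition Mset :: "'h set" where "Mset = {x. \<forall>\<nu>. cinner x (phi V \<phi>0 \<nu>) = 0}"

lemma Mset_sub: "csubspace Mset"
  unfolding csubspace_def Mset_def by (simp add: cinner_add_left cinner_scaleC_left)

lemma Mset_closed: "closed Mset"
  unfolding closed_sequential_limits
proof (intro allI impI, elim conjE)
  fix s l assume s: "\<forall>n. s n \<in> Mset" and l: "s \<longlonglongrightarrow> l"
  show "l \<in> Mset" unfolding Mset_def
  proof (intro CollectI allI)
    fix \<nu>
    have "(\<lambda>n. cinner (s n) (phi V \<phi>0 \<nu>)) \<longlonglongrightarrow> cinner l (phi V \<phi>0 \<nu>)" by (intro tendsto_cinner l tendsto_const)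
    moreover have "(\<lambda>n. cinner (s n) (phi V \<phi>0 \<nu>)) = (\<lambda>n. 0)" using s by (auto simp: Mset_def)
    ultimately show "cinner l (phi V \<phi>0 \<nu>) = 0" using LIMSEQ_unique tendsto_const by metis
  qed
qed

lemma M_inv:
  assumes Td: "\<And>v. T v \<in> domD" and TD: "\<And>v. D (T v) = v + \<alpha> *\<^sub>C T v"
    and P: "\<And>x y. cinner (P x) y = cinner x (T y)"
    and x: "x \<in> Mset"
  shows "P x \<in> Mset"
proof -
  have x0: "cinner x (phi V \<phi>0 \<nu>) = 0" for \<nu> using x by (simp add: Mset_def)
  have ne: "cinner (P x) (phi V \<phi>0 \<nu>) = 0" if nv: "\<nu> \<noteq> \<alpha>" for \<nu>
  proof -
    let ?p = "phi V \<phi>0 \<nu>"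
    define c where "c = 1 / (\<nu> - \<alpha>)"
    define u where "u = T ?p - c *\<^sub>C ?p"
    have pd: "?p \<in> domD" by (rule phi_dom)
    have cpd: "c *\<^sub>C ?p \<in> domD" using domD_sub pd by (rule csubspace_scale)
    have udom: "u \<in> domD" unfolding u_def using csubspace_diff[OF domD_sub Td cpd] .
    have Du1: "D u = (?p + \<alpha> *\<^sub>C T ?p) - (c * \<nu>) *\<^sub>C ?p"
      unfolding u_def by (simp add: Ddiff[OF Td cpd] Dscale[OF pd] phi_D TD scaleC_scaleC)
    have coef: "1 - c * \<nu> = - (\<alpha> * c)" using nv by (simp add: c_def field_simps)
    have "?p - (c * \<nu>) *\<^sub>C ?p = (1 - c * \<nu>) *\<^sub>C ?p" by (simp add: scaleC_diff_left scaleC_one)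
    also have "\<dots> = - ((\<alpha> * c) *\<^sub>C ?p)" by (simp add: coef scaleC_minus_left)
    finally have pc: "?p - (c * \<nu>) *\<^sub>C ?p = - ((\<alpha> * c) *\<^sub>C ?p)" .
    have "D u = \<alpha> *\<^sub>C T ?p + (?p - (c * \<nu>) *\<^sub>C ?p)" unfolding Du1 by (simp add: algebra_simps)
    also have "\<dots> = \<alpha> *\<^sub>C u" unfolding pc by (simp add: u_def scaleC_diff_right scaleC_scaleC)
    finally have Du: "D u = \<alpha> *\<^sub>C u" .
    obtain k where k: "u = k *\<^sub>C phi V \<phi>0 \<alpha>" using ker_char[OF udom Du] by blast
    have Tp: "T ?p = k *\<^sub>C phi V \<phi>0 \<alpha> + c *\<^sub>C ?p" using k by (simp add: u_def algebra_simps)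
    have "cinner (P x) ?p = cinner x (T ?p)" by (rule P)
    also have "\<dots> = 0" unfolding Tp by (simp add: cinner_add_right cinner_scaleC_right x0)
    finally show ?thesis .
  qed
  have all: "cinner (P x) (phi V \<phi>0 \<nu>) = 0" for \<nu>
  proof (cases "\<nu> = \<alpha>")
    case False thus ?thesis by (rule ne)
  next
    case True
    let ?h = "\<lambda>\<nu>. cinner (P x) (phi V \<phi>0 \<nu>)"
    have "(?h \<longlongrightarrow> ?h \<alpha>) (at \<alpha>)"
      using phi_isCont[of \<alpha>] unfolding isCont_def by (intro tendsto_cinner tendsto_const)
    moreover have "(?h \<longlongrightarrow> 0) (at \<alpha>)"
    proof (rule Lim_transform_eventually[OF tendsto_const])
      show "\<forall>\<^sub>F \<nu> in at \<alpha>. 0 = ?h \<nu>"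
        by (rule eventually_mono[OF eventually_at_filter[THEN iffD2]]) (auto simp: ne intro!: always_eventually)
    qed
    ultimately have "?h \<alpha> = 0" using tendsto_unique[OF at_neq_bot] by blast
    thus ?thesis using True by simp
  qed
  thus ?thesis by (simp add: Mset_def)
qed

end



context adm begin

lemma Mset_zero: "Mset = {0}"
proof (rule ccontr)
  assume "Mset \<noteq> {0}"
  then obtain x0 where x0: "x0 \<in> Mset" "x0 \<noteq> 0" using Mset_sub csubspace_0 by blast
  obtain S where S: "S \<subseteq> domD" "self_adjoint_op S D" "has_compact_resolvent S D" using SA by blast
  obtain \<mu> R where R: "compact_op R" "\<forall>y. R y \<in> S \<and> D (R y) - \<mu> *\<^sub>C R y = y"
      "\<forall>x\<in>S. R (D x - \<mu> *\<^sub>C x) = x"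
    using S(3) unfolding has_compact_resolvent_def by blast
  have Rb: "bounded_clinear_op R" using R(1) by (simp add: compact_op_def)
  define R' where "R' = adj UNIV R"
  have R'b: "bounded_clinear_op R'" unfolding R'_def by (rule adj_bop[OF Rb])
  have cR: "seqcpt R" by (rule compact_seqcpt[OF R(1)])
  have cR': "seqcpt R'" unfolding R'_def by (rule seqcpt_adj[OF Rb cR])
  have RR': "cinner (R x) y = cinner x (R' y)" for x y unfolding R'_def by (rule adj_prop[OF Rb])
  have R'R: "cinner (R' x) y = cinner x (R y)" for x y
    by (subst cinner_commute) (simp add: RR'[symmetric] cinner_commute[of x])
  have Ssub: "csubspace S" using S(2) by (simp add: self_adjoint_op_def clinear_on_def)
  have Sdense: "op_dense cinner UNIV S" using S(2) by (simp add: self_adjoint_op_def)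
  have Sadj: "adj_dom S D = S" "\<forall>y\<in>S. adj S D y = D y" using S(2) by (auto simp: self_adjoint_op_def)
  have Ssym: "cinner (D a) b = cinner a (D b)" if a: "a \<in> S" and b: "b \<in> S" for a b
  proof -
    obtain z where z: "\<forall>u\<in>S. cinner (D u) b = cinner u z" using b Sadj(1) by (auto simp: adj_dom_def)
    have "adj S D b = z" by (rule adj_eqI[OF Sdense z])
    hence "z = D b" using Sadj(2) b by simp
    thus ?thesis using z a by simp
  qed
  have RS: "R y \<in> S" for y using R(2) by blast
  have RD: "D (R y) = y + \<mu> *\<^sub>C R y" for y using R(2)[rule_format, of y] by (simp add: algebra_simps)
  have Rdom: "R y \<in> domD" for y using RS S(1) by blast
  have R'prop: "R' v \<in> S \<and> D (R' v) = v + cnj \<mu> *\<^sub>C R' v" for v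
  proof -
    have h: "\<forall>a\<in>S. cinner (D a) (R' v) = cinner a (v + cnj \<mu> *\<^sub>C R' v)"
    proof
      fix a assume a: "a \<in> S"
      have ad: "a \<in> domD" using a S(1) by blast
      have "R (D a) = R (D a - \<mu> *\<^sub>C a) + R (\<mu> *\<^sub>C a)" by (simp add: bop_add[OF Rb, symmetric])
      also have "\<dots> = a + \<mu> *\<^sub>C R a" using R(3) a by (simp add: bop_scale[OF Rb])
      finally have "R (D a) = a + \<mu> *\<^sub>C R a" .
      hence "cinner (D a) (R' v) = cinner (a + \<mu> *\<^sub>C R a) v" by (simp add: RR'[symmetric])
      also have "\<dots> = cinner a v + \<mu> * cinner a (R' v)" by (simp add: cinner_add_left cinner_scaleC_left RR')
      also have "\<dots> = cinner a (v + cnj \<mu> *\<^sub>C R' v)" by (simp add: cinner_add_right cinner_scaleC_right)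
      finally show "cinner (D a) (R' v) = cinner a (v + cnj \<mu> *\<^sub>C R' v)" .
    qed
    hence "R' v \<in> adj_dom S D" by (auto simp: adj_dom_def)
    hence inS: "R' v \<in> S" using Sadj(1) by simp
    have "adj S D (R' v) = v + cnj \<mu> *\<^sub>C R' v" by (rule adj_eqI[OF Sdense h])
    thus ?thesis using Sadj(2) inS by simp
  qed
  have R'S: "R' v \<in> S" for v using R'prop by blast
  have R'D: "D (R' v) = v + cnj \<mu> *\<^sub>C R' v" for v using R'prop by blast
  have R'dom: "R' v \<in> domD" for v using R'S S(1) by blast
  have inj1: "a = 0" if a: "a \<in> S" "D a - \<mu> *\<^sub>C a = 0" for a
    using R(3) a bop_zero[OF Rb] by metis
  have inj2: "a = 0" if a: "a \<in> S" "D a - cnj \<mu> *\<^sub>C a = 0" for a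
  proof (cases "cnj \<mu> = \<mu>")
    case True thus ?thesis using inj1 a by simp
  next
    case False
    have Da: "D a = cnj \<mu> *\<^sub>C a" using a(2) by simp
    have "cinner (D a) a = cinner a (D a)" by (rule Ssym[OF a(1) a(1)])
    hence "cnj \<mu> * cinner a a = \<mu> * cinner a a" by (simp add: Da cinner_scaleC_left cinner_scaleC_right)
    hence "(cnj \<mu> - \<mu>) * cinner a a = 0" by (simp add: algebra_simps)
    hence "cinner a a = 0" using False by simp
    thus ?thesis by (simp add: cinner_eq_zero_iff)
  qed
  have comm: "R (R' v) = R' (R v)" for v
  proof -
    define k where "k = \<mu> - cnj \<mu>"
    define A1 where "A1 = R v - R' v - k *\<^sub>C R' (R v)"
    have A1S: "A1 \<in> S" unfolding A1_def using Ssub RS R'S by (intro csubspace_diff csubspace_scale) auto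
    have kd: "k *\<^sub>C R' (R v) \<in> domD" using domD_sub R'dom by (rule csubspace_scale)
    have dd: "R v - R' v \<in> domD" using domD_sub Rdom R'dom by (rule csubspace_diff)
    have "D A1 - cnj \<mu> *\<^sub>C A1 = (\<mu> *\<^sub>C R v - k *\<^sub>C R v) - cnj \<mu> *\<^sub>C R v"
    proof -
      have "D A1 = ((v + \<mu> *\<^sub>C R v) - (v + cnj \<mu> *\<^sub>C R' v)) - k *\<^sub>C (R v + cnj \<mu> *\<^sub>C R' (R v))"
        unfolding A1_def by (simp only: Ddiff[OF dd kd] Ddiff[OF Rdom R'dom] Dscale[OF R'dom] RD R'D)
      thus ?thesis unfolding A1_def
        by (simp add: scaleC_add_right scaleC_diff_right scaleC_scaleC algebra_simps)
    qed
    also have "\<dots> = (\<mu> - k - cnj \<mu>) *\<^sub>C R v" by (simp add: scaleC_diff_left)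
    also have "\<mu> - k - cnj \<mu> = 0" by (simp add: k_def)
    finally have "A1 = 0" using inj2 A1S by simp
    hence e1: "R v - R' v = k *\<^sub>C R' (R v)" by (simp add: A1_def)
    define A2 where "A2 = R v - R' v - k *\<^sub>C R (R' v)"
    have A2S: "A2 \<in> S" unfolding A2_def using Ssub RS R'S by (intro csubspace_diff csubspace_scale) auto
    have kd2: "k *\<^sub>C R (R' v) \<in> domD" using domD_sub Rdom by (rule csubspace_scale)
    have "D A2 - \<mu> *\<^sub>C A2 = (k *\<^sub>C R' v - cnj \<mu> *\<^sub>C R' v) + \<mu> *\<^sub>C R' v - k *\<^sub>C R' v - \<mu> *\<^sub>C R' v + cnj \<mu> *\<^sub>C R' v"
    proof -
      have "D A2 = ((v + \<mu> *\<^sub>C R v) - (v + cnj \<mu> *\<^sub>C R' v)) - k *\<^sub>C (R' v + \<mu> *\<^sub>C R (R' v))"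
        unfolding A2_def by (simp only: Ddiff[OF dd kd2] Ddiff[OF Rdom R'dom] Dscale[OF Rdom] RD R'D)
      thus ?thesis unfolding A2_def
        by (simp add: scaleC_add_right scaleC_diff_right scaleC_scaleC k_def scaleC_diff_left algebra_simps)
    qed
    also have "\<dots> = 0" by (simp add: algebra_simps)
    finally have "A2 = 0" using inj1 A2S by simp
    hence e2: "R v - R' v = k *\<^sub>C R (R' v)" by (simp add: A2_def)
    show ?thesis
    proof (cases "k = 0")
      case False
      have "k *\<^sub>C R (R' v) = k *\<^sub>C R' (R v)" using e1 e2 by simp
      hence "(1 / k) *\<^sub>C (k *\<^sub>C R (R' v)) = (1 / k) *\<^sub>C (k *\<^sub>C R' (R v))" by simp
      thus ?thesis using False by (simp add: scaleC_scaleC scaleC_one)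
    next
      case True
      have eq: "R w = R' w" for w
      proof -
        define A1 where "A1 = R w - R' w - k *\<^sub>C R' (R w)"
        have A1S: "A1 \<in> S" unfolding A1_def using Ssub RS R'S by (intro csubspace_diff csubspace_scale) auto
        have kd: "k *\<^sub>C R' (R w) \<in> domD" using domD_sub R'dom by (rule csubspace_scale)
        have dd: "R w - R' w \<in> domD" using domD_sub Rdom R'dom by (rule csubspace_diff)
        have "D A1 - cnj \<mu> *\<^sub>C A1 = (\<mu> *\<^sub>C R w - k *\<^sub>C R w) - cnj \<mu> *\<^sub>C R w"
        proof -
          have "D A1 = ((w + \<mu> *\<^sub>C R w) - (w + cnj \<mu> *\<^sub>C R' w)) - k *\<^sub>C (R w + cnj \<mu> *\<^sub>C R' (R w))"
            unfolding A1_def by (simp only: Ddiff[OF dd kd] Ddiff[OF Rdom R'dom] Dscale[OF R'dom] RD R'D)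
          thus ?thesis unfolding A1_def
            by (simp add: scaleC_add_right scaleC_diff_right scaleC_scaleC algebra_simps)
        qed
        also have "\<dots> = (\<mu> - k - cnj \<mu>) *\<^sub>C R w" by (simp add: scaleC_diff_left)
        also have "\<mu> - k - cnj \<mu> = 0" by (simp add: k_def)
        finally have "A1 = 0" using inj2 A1S by simp
        thus ?thesis using True by (simp add: A1_def)
      qed
      show ?thesis by (simp add: eq)
    qed
  qed
  define H1 where "H1 x = (1/2::complex) *\<^sub>C (R x + R' x)" for x
  define H2 where "H2 x = (- \<i>/2) *\<^sub>C (R x + (-1) *\<^sub>C R' x)" for x
  have H1b: "bounded_clinear_op H1" using bop_comb[OF Rb R'b, of "1/2" 1] by (simp add: H1_def[abs_def] scaleC_one)
  have H2b: "bounded_clinear_op H2" using bop_comb[OF Rb R'b, of "- \<i>/2" "-1"] by (simp add: H2_def[abs_def])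
  have cH1: "seqcpt H1" using seqcpt_scale[OF seqcpt_add[OF cR cR'], of "1/2"] by (simp add: H1_def[abs_def])
  have cH2: "seqcpt H2" using seqcpt_scale[OF seqcpt_add[OF cR seqcpt_scale[OF cR', of "-1"]], of "- \<i>/2"]
    by (simp add: H2_def[abs_def])
  have H1sa: "cinner (H1 x) y = cinner x (H1 y)" for x y
    by (simp add: H1_def cinner_scaleC_left cinner_scaleC_right cinner_add_left cinner_add_right RR' R'R algebra_simps)
  have H2sa: "cinner (H2 x) y = cinner x (H2 y)" for x y
    by (simp add: H2_def cinner_scaleC_left cinner_scaleC_right cinner_add_left cinner_add_right RR' R'R algebra_simps)
  have Rinv: "R x \<in> Mset" if "x \<in> Mset" for x
    by (rule M_inv[where T=R' and \<alpha>="cnj \<mu>"]) (use R'dom R'D RR' that in auto)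
  have R'inv: "R' x \<in> Mset" if "x \<in> Mset" for x
    by (rule M_inv[where T=R and \<alpha>=\<mu>]) (use Rdom RD R'R that in auto)
  have H1inv: "H1 x \<in> Mset" if "x \<in> Mset" for x
    unfolding H1_def using Mset_sub Rinv[OF that] R'inv[OF that] by (intro csubspace_scale csubspace_add) auto
  have H2inv: "H2 x \<in> Mset" if "x \<in> Mset" for x
    unfolding H2_def using Mset_sub Rinv[OF that] R'inv[OF that] by (intro csubspace_scale csubspace_add) auto
  obtain v t where v: "v \<in> Mset" "v \<noteq> 0" "H1 v = t *\<^sub>C v"
    using sa_eigen[OF H1b cH1 Mset_sub Mset_closed x0 H1inv H1sa] by blast
  define E where "E = {x \<in> Mset. H1 x = t *\<^sub>C x}"
  have Esub: "csubspace E"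
    unfolding csubspace_def E_def using Mset_sub
    by (auto simp: bop_zero[OF H1b] bop_add[OF H1b] bop_scale[OF H1b] csubspace_0 csubspace_add csubspace_scale
        scaleC_add_right scaleC_scaleC mult.commute)
  have Eclosed: "closed E"
    unfolding closed_sequential_limits
  proof (intro allI impI, elim conjE)
    fix s l assume s: "\<forall>n. s n \<in> E" and l: "s \<longlonglongrightarrow> l"
    have lM: "l \<in> Mset" using closed_sequentially[OF Mset_closed _ l] s by (auto simp: E_def)
    have "(\<lambda>n. H1 (s n)) \<longlonglongrightarrow> H1 l" by (rule bop_tendsto[OF H1b l])
    moreover have "(\<lambda>n. H1 (s n)) = (\<lambda>n. t *\<^sub>C s n)" using s by (auto simp: E_def)
    ultimately have "(\<lambda>n. t *\<^sub>C s n) \<longlonglongrightarrow> H1 l" by simp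
    moreover have "(\<lambda>n. t *\<^sub>C s n) \<longlonglongrightarrow> t *\<^sub>C l" by (rule tendsto_scaleC_const[OF l])
    ultimately have "H1 l = t *\<^sub>C l" using LIMSEQ_unique by blast
    thus "l \<in> E" using lM by (simp add: E_def)
  qed
  have comm12: "H1 (H2 x) = H2 (H1 x)" for x
    by (simp add: H1_def H2_def bop_add[OF Rb] bop_add[OF R'b] bop_scale[OF Rb] bop_scale[OF R'b] comm
        scaleC_add_right scaleC_scaleC scaleC_minus1 scaleC_minus_right bop_minus[OF Rb] bop_minus[OF R'b] bop_diff[OF Rb] bop_diff[OF R'b]
        scaleC_minus_left scaleC_diff_right algebra_simps)
  have H2E: "H2 x \<in> E" if xE: "x \<in> E" for x
  proof -
    have "H1 (H2 x) = H2 (H1 x)" by (rule comm12)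
    also have "\<dots> = t *\<^sub>C H2 x" using xE by (simp add: E_def bop_scale[OF H2b])
    finally show ?thesis using xE H2inv by (simp add: E_def)
  qed
  have vE: "v \<in> E" using v by (simp add: E_def)
  obtain w s where w: "w \<in> E" "w \<noteq> 0" "H2 w = s *\<^sub>C w"
    using sa_eigen[OF H2b cH2 Esub Eclosed vE v(2) H2E H2sa] by blast
  have Rsplit: "R x = H1 x + \<i> *\<^sub>C H2 x" for x
  proof -
    have "\<i> *\<^sub>C H2 x = (1/2::complex) *\<^sub>C (R x - R' x)"
      by (simp add: H2_def scaleC_scaleC scaleC_minus1)
    hence "H1 x + \<i> *\<^sub>C H2 x = (1/2::complex) *\<^sub>C ((R x + R' x) + (R x - R' x))"
      by (simp only: H1_def scaleC_add_right)
    also have "(R x + R' x) + (R x - R' x) = (2::complex) *\<^sub>C R x" by (simp add: two_scaleC)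
    also have "(1/2::complex) *\<^sub>C ((2::complex) *\<^sub>C R x) = R x" by (simp add: scaleC_scaleC scaleC_one)
    finally show ?thesis by simp
  qed
  define l where "l = t + \<i> * s"
  have wM: "w \<in> Mset" and H1w: "H1 w = t *\<^sub>C w" using w(1) by (auto simp: E_def)
  have Rw: "R w = l *\<^sub>C w"
    by (simp add: Rsplit H1w w(3) l_def scaleC_scaleC scaleC_add_left)
  have l0: "l \<noteq> 0"
  proof
    assume "l = 0"
    hence "R w = 0" using Rw by simp
    hence "w = D 0 - \<mu> *\<^sub>C 0" using R(2)[rule_format, of w] by simp
    thus False using w(2) D0 by simp
  qed
  have wS: "w \<in> S"
  proof -
    have "w = (1 / l) *\<^sub>C R w" using l0 by (simp add: Rw scaleC_scaleC scaleC_one)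
    thus ?thesis using Ssub RS by (metis csubspace_scale)
  qed
  have wdom: "w \<in> domD" using wS S(1) by blast
  have "l *\<^sub>C D w = w + \<mu> *\<^sub>C (l *\<^sub>C w)" using RD[of w] by (simp add: Rw Dscale[OF wdom])
  hence "(1 / l) *\<^sub>C (l *\<^sub>C D w) = (1 / l) *\<^sub>C (w + \<mu> *\<^sub>C (l *\<^sub>C w))" by simp
  hence Dw: "D w = (1 / l + \<mu>) *\<^sub>C w" using l0
    by (simp add: scaleC_scaleC scaleC_one scaleC_add_right scaleC_add_left)
  obtain k where k: "w = k *\<^sub>C phi V \<phi>0 (1 / l + \<mu>)" using ker_char[OF wdom Dw] by blast
  have "cinner w (phi V \<phi>0 (1 / l + \<mu>)) = 0" using wM by (simp add: Mset_def)
  hence "k * cinner (phi V \<phi>0 (1 / l + \<mu>)) (phi V \<phi>0 (1 / l + \<mu>)) = 0"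
    by (subst (asm) k) (simp add: cinner_scaleC_left)
  hence "k = 0" using phi_nonzero by (simp add: cinner_eq_zero_iff)
  thus False using k w(2) by simp
qed

end

context adm begin

lemma gft_inj: "inj (gft V \<phi>0)"
proof (rule injI)
  fix a b assume h: "gft V \<phi>0 a = gft V \<phi>0 b"
  have "gft V \<phi>0 (a - b) = gft V \<phi>0 a - gft V \<phi>0 b" by (rule gft_diff)
  hence z: "\<And>\<mu>. gft V \<phi>0 (a - b) \<mu> = 0" using h by simp
  have "a - b \<in> Mset" unfolding Mset_def
  proof (intro CollectI allI)
    fix \<nu>
    show "cinner (a - b) (phi V \<phi>0 \<nu>) = 0" using z[of "cnj \<nu>"] by (simp add: gft_def)
  qed
  thus "a = b" using Mset_zero by simp
qed

lemma inv_gft: "inv_into UNIV (gft V \<phi>0) (gft V \<phi>0 x) = x"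
  by (rule inv_into_f_f[OF gft_inj UNIV_I])

lemma WH_gft: "f \<in> WH V \<phi>0 \<Longrightarrow> f = gft V \<phi>0 (inv_into UNIV (gft V \<phi>0) f)"
  unfolding WH_def by (simp add: f_inv_into_f)

lemma WH_inner_gft: "WH_inner V \<phi>0 (gft V \<phi>0 a) (gft V \<phi>0 b) = cinner a b"
  by (simp add: WH_inner_def inv_gft)

lemma ipn_gft: "ip_norm (WH_inner V \<phi>0) (gft V \<phi>0 a - gft V \<phi>0 b) = norm (a - b)"
  by (simp add: ip_norm_def gft_diff[symmetric] WH_inner_gft norm_eq_sqrt_cinner)

lemma ip_conv_gft: "ip_conv (WH_inner V \<phi>0) (\<lambda>n. gft V \<phi>0 (s n)) (gft V \<phi>0 a) \<longleftrightarrow> s \<longlonglongrightarrow> a"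
  by (simp add: ip_conv_def ipn_gft tendsto_norm_zero_iff LIM_zero_iff)

lemma gft_in_WH: "gft V \<phi>0 x \<in> WH V \<phi>0" by (simp add: WH_def)

lemma V_D_decomp:
  assumes w: "w \<in> domD"
  shows "\<exists>k. V (D w) = w - k *\<^sub>C \<phi>0"
proof -
  define u where "u = w - V (D w)"
  have ud: "u \<in> domD" unfolding u_def using csubspace_diff[OF domD_sub w Vdom] .
  have "D u = 0 *\<^sub>C u" unfolding u_def by (simp add: Ddiff[OF w Vdom] DV)
  then obtain k where "u = k *\<^sub>C phi V \<phi>0 0" using ker_char[OF ud] by blast
  hence "V (D w) = w - k *\<^sub>C \<phi>0" by (simp add: u_def phi_zero algebra_simps)
  thus ?thesis by blast
qed

lemma bshift_Mz:
  assumes f: "f = gft V \<phi>0 x"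
  shows "backward_shift (Mz f) = f"
proof (rule ext)
  fix \<mu>
  show "backward_shift (Mz f) \<mu> = f \<mu>"
  proof (cases "\<mu> = 0")
    case False thus ?thesis by (simp add: backward_shift_def Mz_def)
  next
    case True
    have "isCont (gft V \<phi>0 x) 0" by (rule gft_isCont)
    hence fc: "(f \<longlongrightarrow> f 0) (at 0)" by (simp add: f isCont_def)
    have "((\<lambda>y. (Mz f y - Mz f 0) / (y - 0)) \<longlongrightarrow> f 0) (at 0)"
    proof (rule Lim_transform_eventually[OF fc])
      show "\<forall>\<^sub>F y in at 0. f y = (Mz f y - Mz f 0) / (y - 0)"
        by (rule eventually_mono[OF eventually_at_filter[THEN iffD2]]) (auto simp: Mz_def intro!: always_eventually)
    qed
    hence "(Mz f has_field_derivative f 0) (at 0)" by (simp add: has_field_derivative_iff)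
    hence "deriv (Mz f) 0 = f 0" by (rule DERIV_imp_deriv)
    thus ?thesis using True by (simp add: backward_shift_def)
  qed
qed

lemma Mz_char:
  assumes f: "f \<in> Mz_dom V \<phi>0"
  shows "\<exists>x y. f = gft V \<phi>0 x \<and> Mz f = gft V \<phi>0 y \<and> x \<in> adj_dom domD D \<and> adj domD D x = y"
proof -
  define x where "x = inv_into UNIV (gft V \<phi>0) f"
  define y where "y = inv_into UNIV (gft V \<phi>0) (Mz f)"
  have fx: "f = gft V \<phi>0 x" using f WH_gft by (auto simp: Mz_dom_def x_def)
  have fy: "Mz f = gft V \<phi>0 y" using f WH_gft by (auto simp: Mz_dom_def y_def Mz_def)
  have "gft V \<phi>0 (adj UNIV V y) = gft V \<phi>0 x" unfolding part1 fy[symmetric] using bshift_Mz[OF fx] fx by simp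
  hence Vy: "adj UNIV V y = x" using gft_inj by (simp add: inj_eq)
  have y0: "cinner \<phi>0 y = 0"
  proof -
    have "cinner y \<phi>0 = Mz f 0" using fy gft_zero by simp
    also have "\<dots> = 0" by (simp add: Mz_def)
    finally show ?thesis by (subst cinner_commute) simp
  qed
  have w: "\<forall>w\<in>domD. cinner (D w) x = cinner w y"
  proof
    fix w assume wd: "w \<in> domD"
    obtain k where k: "V (D w) = w - k *\<^sub>C \<phi>0" using V_D_decomp[OF wd] by blast
    have "cinner (D w) x = cinner (V (D w)) y" by (simp add: Vy[symmetric] adj_prop[OF Vb])
    also have "\<dots> = cinner w y" using y0 by (simp add: k cinner_diff_left cinner_scaleC_left)
    finally show "cinner (D w) x = cinner w y" .
  qed
  hence "x \<in> adj_dom domD D" by (auto simp: adj_dom_def)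
  moreover have "adj domD D x = y" by (rule adj_eqI[OF domD_dense w])
  ultimately show ?thesis using fx fy by blast
qed

lemma DS_sub: "csubspace (adj_dom domD D)"
  unfolding csubspace_def adj_dom_def
proof (intro conjI allI impI ballI)
  show "0 \<in> {y. \<exists>z. \<forall>x\<in>domD. cinner (D x) y = cinner x z}" by (auto intro: exI[of _ 0])
next
  fix a b assume a: "a \<in> {y. \<exists>z. \<forall>x\<in>domD. cinner (D x) y = cinner x z}"
    and b: "b \<in> {y. \<exists>z. \<forall>x\<in>domD. cinner (D x) y = cinner x z}"
  obtain za where za: "\<forall>x\<in>domD. cinner (D x) a = cinner x za" using a by blast
  obtain zb where zb: "\<forall>x\<in>domD. cinner (D x) b = cinner x zb" using b by blast
  have "\<forall>x\<in>domD. cinner (D x) (a + b) = cinner x (za + zb)" using za zb by (simp add: cinner_add_right)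
  thus "a + b \<in> {y. \<exists>z. \<forall>x\<in>domD. cinner (D x) y = cinner x z}" by blast
next
  fix c a assume a: "a \<in> {y. \<exists>z. \<forall>x\<in>domD. cinner (D x) y = cinner x z}"
  obtain za where za: "\<forall>x\<in>domD. cinner (D x) a = cinner x za" using a by blast
  have "\<forall>x\<in>domD. cinner (D x) (c *\<^sub>C a) = cinner x (c *\<^sub>C za)" using za by (simp add: cinner_scaleC_right)
  thus "c *\<^sub>C a \<in> {y. \<exists>z. \<forall>x\<in>domD. cinner (D x) y = cinner x z}" by blast
qed

lemma DS_dense: "op_dense cinner UNIV (adj_dom domD D)"
proof (rule dense_from_orth[OF DS_sub])
  fix y assume orth: "\<forall>x\<in>adj_dom domD D. cinner x y = 0"
  have Vin: "adj UNIV V v \<in> adj_dom domD D" if v: "cinner \<phi>0 v = 0" for v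
  proof -
    have "\<forall>w\<in>domD. cinner (D w) (adj UNIV V v) = cinner w v"
    proof
      fix w assume wd: "w \<in> domD"
      obtain k where k: "V (D w) = w - k *\<^sub>C \<phi>0" using V_D_decomp[OF wd] by blast
      have "cinner (D w) (adj UNIV V v) = cinner (V (D w)) v" by (simp add: adj_prop[OF Vb])
      also have "\<dots> = cinner w v" using v by (simp add: k cinner_diff_left cinner_scaleC_left)
      finally show "cinner (D w) (adj UNIV V v) = cinner w v" .
    qed
    thus ?thesis by (auto simp: adj_dom_def)
  qed
  have Vyv: "cinner (V y) v = 0" if v: "cinner \<phi>0 v = 0" for v
  proof -
    have "cinner (adj UNIV V v) y = 0" using orth Vin[OF v] by blast
    hence "cnj (cinner y (adj UNIV V v)) = 0" by (simp add: cinner_commute[of _ y])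
    hence "cinner y (adj UNIV V v) = 0" by simp
    thus ?thesis by (simp add: adj_prop[OF Vb])
  qed
  have pp: "cinner \<phi>0 \<phi>0 \<noteq> 0" using phi0(3) by (simp add: cinner_eq_zero_iff)
  have ppr: "cnj (cinner \<phi>0 \<phi>0) = cinner \<phi>0 \<phi>0" by (metis cinner_commute)
  define c where "c = cinner (V y) \<phi>0 / cinner \<phi>0 \<phi>0"
  define v where "v = V y - c *\<^sub>C \<phi>0"
  have v0: "cinner \<phi>0 v = 0"
  proof -
    have "cinner \<phi>0 v = cnj (cinner (V y) \<phi>0) - cnj c * cinner \<phi>0 \<phi>0"
      by (simp add: v_def cinner_diff_right cinner_scaleC_right cinner_commute[of \<phi>0 "V y"])
    also have "cnj c * cinner \<phi>0 \<phi>0 = cnj (cinner (V y) \<phi>0)" using pp ppr by (simp add: c_def)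
    finally show ?thesis by simp
  qed
  have "cinner v v = cinner (V y) v - c * cinner \<phi>0 v" by (simp add: v_def cinner_diff_left cinner_scaleC_left)
  also have "\<dots> = 0" using Vyv[OF v0] v0 by simp
  finally have "v = 0" by (simp add: cinner_eq_zero_iff)
  hence "V y = c *\<^sub>C \<phi>0" by (simp add: v_def)
  hence "D (V y) = c *\<^sub>C D \<phi>0" by (simp add: Dscale[OF phi0(1)])
  thus "y = 0" using phi0(2) by (simp add: DV)
qed

lemma DS_sym:
  assumes x: "x \<in> adj_dom domD D" and x': "x' \<in> adj_dom domD D"
  shows "cinner (adj domD D x) x' = cinner x (adj domD D x')"
proof -
  obtain S where S: "S \<subseteq> domD" "self_adjoint_op S D" using SA by blast
  have Sdense: "op_dense cinner UNIV S" using S(2) by (simp add: self_adjoint_op_def)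
  have Sadj: "adj_dom S D = S" "\<forall>y\<in>S. adj S D y = D y" using S(2) by (auto simp: self_adjoint_op_def)
  have red: "a \<in> S \<and> adj domD D a = D a" if a: "a \<in> adj_dom domD D" for a
  proof -
    obtain z where z: "\<forall>u\<in>domD. cinner (D u) a = cinner u z" using a by (auto simp: adj_dom_def)
    have zS: "\<forall>u\<in>S. cinner (D u) a = cinner u z" using z S(1) by blast
    hence "a \<in> adj_dom S D" by (auto simp: adj_dom_def)
    hence aS: "a \<in> S" using Sadj(1) by simp
    have "adj S D a = z" by (rule adj_eqI[OF Sdense zS])
    moreover have "adj domD D a = z" by (rule adj_eqI[OF domD_dense z])
    ultimately show ?thesis using aS Sadj(2) by simp
  qed
  have xS: "x \<in> S" and ax: "adj domD D x = D x" using red[OF x] by auto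
  have x'S: "x' \<in> S" and ax': "adj domD D x' = D x'" using red[OF x'] by auto
  obtain z where z: "\<forall>u\<in>S. cinner (D u) x' = cinner u z" using x'S Sadj(1) by (auto simp: adj_dom_def)
  have "adj S D x' = z" by (rule adj_eqI[OF Sdense z])
  hence "z = D x'" using Sadj(2) x'S by simp
  thus ?thesis using z xS ax ax' by simp
qed

end



context adm begin

lemma part3: "op_closed (WH_inner V \<phi>0) (WH V \<phi>0) (Mz_dom V \<phi>0) Mz"
  unfolding op_closed_def
proof (intro conjI allI impI)
  show "Mz_dom V \<phi>0 \<subseteq> WH V \<phi>0" by (auto simp: Mz_dom_def)
  show "\<forall>x\<in>Mz_dom V \<phi>0. Mz x \<in> WH V \<phi>0" by (auto simp: Mz_dom_def Mz_def)
next
  fix s a b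
  assume H: "(\<forall>n. s n \<in> Mz_dom V \<phi>0) \<and> a \<in> WH V \<phi>0 \<and> b \<in> WH V \<phi>0 \<and>
     ip_conv (WH_inner V \<phi>0) s a \<and> ip_conv (WH_inner V \<phi>0) (\<lambda>n. Mz (s n)) b"
  have s: "\<forall>n. s n \<in> Mz_dom V \<phi>0" and a: "a \<in> WH V \<phi>0" and b: "b \<in> WH V \<phi>0"
    and ca: "ip_conv (WH_inner V \<phi>0) s a" and cb: "ip_conv (WH_inner V \<phi>0) (\<lambda>n. Mz (s n)) b"
    using H by auto
  define xs where "xs n = inv_into UNIV (gft V \<phi>0) (s n)" for n
  define ys where "ys n = inv_into UNIV (gft V \<phi>0) (Mz (s n))" for n
  define xa where "xa = inv_into UNIV (gft V \<phi>0) a"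
  define xb where "xb = inv_into UNIV (gft V \<phi>0) b"
  have sx: "s n = gft V \<phi>0 (xs n)" for n using s WH_gft by (auto simp: Mz_dom_def xs_def)
  have sy: "Mz (s n) = gft V \<phi>0 (ys n)" for n using s WH_gft by (auto simp: Mz_dom_def ys_def Mz_def)
  have ax: "a = gft V \<phi>0 xa" using a WH_gft by (simp add: xa_def)
  have bx: "b = gft V \<phi>0 xb" using b WH_gft by (simp add: xb_def)
  have s_eq: "s = (\<lambda>n. gft V \<phi>0 (xs n))" using sx by auto
  have ms_eq: "(\<lambda>n. Mz (s n)) = (\<lambda>n. gft V \<phi>0 (ys n))" using sy by auto
  have xl: "xs \<longlonglongrightarrow> xa" using ca unfolding s_eq ax ip_conv_gft .
  have yl: "ys \<longlonglongrightarrow> xb" using cb unfolding ms_eq bx ip_conv_gft .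
  have eq: "b = Mz a"
  proof (rule ext)
    fix \<mu>
    let ?p = "phi V \<phi>0 (cnj \<mu>)"
    have "(\<lambda>n. cinner (xs n) ?p) \<longlonglongrightarrow> cinner xa ?p" by (intro tendsto_cinner xl tendsto_const)
    hence "(\<lambda>n. \<mu> * cinner (xs n) ?p) \<longlonglongrightarrow> \<mu> * cinner xa ?p" by (intro tendsto_mult tendsto_const)
    moreover have "(\<lambda>n. \<mu> * cinner (xs n) ?p) = (\<lambda>n. cinner (ys n) ?p)"
    proof
      fix n
      have "Mz (s n) \<mu> = gft V \<phi>0 (ys n) \<mu>" using sy by simp
      thus "\<mu> * cinner (xs n) ?p = cinner (ys n) ?p" by (simp add: Mz_def sx gft_def)
    qed
    moreover have "(\<lambda>n. cinner (ys n) ?p) \<longlonglongrightarrow> cinner xb ?p" by (intro tendsto_cinner yl tendsto_const)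
    ultimately have "\<mu> * cinner xa ?p = cinner xb ?p" using LIMSEQ_unique by metis
    thus "b \<mu> = Mz a \<mu>" by (simp add: ax bx Mz_def gft_def)
  qed
  show "a \<in> Mz_dom V \<phi>0" using a b eq by (simp add: Mz_dom_def Mz_def)
  show "Mz a = b" using eq by simp
qed

lemma part4: "op_symmetric (WH_inner V \<phi>0) (WH V \<phi>0) (Mz_dom V \<phi>0) Mz"
  unfolding op_symmetric_def op_dense_def
proof (intro conjI ballI)
  show "Mz_dom V \<phi>0 \<subseteq> WH V \<phi>0" by (auto simp: Mz_dom_def)
next
  fix a assume a: "a \<in> WH V \<phi>0"
  define xa where "xa = inv_into UNIV (gft V \<phi>0) a"
  have ax: "a = gft V \<phi>0 xa" using a WH_gft by (simp add: xa_def)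
  obtain s where s: "\<forall>n. s n \<in> adj_dom domD D" "s \<longlonglongrightarrow> xa"
    using DS_dense unfolding op_dense_def ip_conv_cinner by blast
  have h1: "\<forall>n. gft V \<phi>0 (s n) \<in> Mz_dom V \<phi>0" using s(1) part2 by blast
  have h2: "ip_conv (WH_inner V \<phi>0) (\<lambda>n. gft V \<phi>0 (s n)) a" unfolding ax ip_conv_gft by (rule s(2))
  show "\<exists>s. (\<forall>n. s n \<in> Mz_dom V \<phi>0) \<and> ip_conv (WH_inner V \<phi>0) s a"
    apply (rule exI[where x="\<lambda>n. gft V \<phi>0 (s n)"]) using h1 h2 by blast
next
  fix x assume "x \<in> Mz_dom V \<phi>0"
  thus "Mz x \<in> WH V \<phi>0" by (auto simp: Mz_dom_def Mz_def)
next
  fix f g assume f: "f \<in> Mz_dom V \<phi>0" and g: "g \<in> Mz_dom V \<phi>0"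
  obtain x y where xy: "f = gft V \<phi>0 x" "Mz f = gft V \<phi>0 y" "x \<in> adj_dom domD D" "adj domD D x = y"
    using Mz_char[OF f] by blast
  obtain x' y' where xy': "g = gft V \<phi>0 x'" "Mz g = gft V \<phi>0 y'" "x' \<in> adj_dom domD D" "adj domD D x' = y'"
    using Mz_char[OF g] by blast
  have "WH_inner V \<phi>0 (Mz f) g = cinner y x'" by (simp only: xy(2) xy'(1) WH_inner_gft)
  also have "\<dots> = cinner x y'" using DS_sym[OF xy(3) xy'(3)] xy(4) xy'(4) by simp
  also have "\<dots> = WH_inner V \<phi>0 f (Mz g)" by (simp only: xy(1) xy'(2) WH_inner_gft)
  finally show "WH_inner V \<phi>0 (Mz f) g = WH_inner V \<phi>0 f (Mz g)" .
qed

lemma part5: "(\<lambda>f. Mz f - (\<lambda>z. \<mu> * f z)) ` Mz_dom V \<phi>0 = {f \<in> WH V \<phi>0. f \<mu> = 0}"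
proof (intro set_eqI iffI)
  fix g assume "g \<in> (\<lambda>f. Mz f - (\<lambda>z. \<mu> * f z)) ` Mz_dom V \<phi>0"
  then obtain f where f: "f \<in> Mz_dom V \<phi>0" and g: "g = Mz f - (\<lambda>z. \<mu> * f z)" by blast
  obtain x y where xy: "f = gft V \<phi>0 x" "Mz f = gft V \<phi>0 y" using Mz_char[OF f] by blast
  have "g = gft V \<phi>0 y - (\<lambda>z. \<mu> * f z)" by (simp only: g xy(2))
  also have "\<dots> = gft V \<phi>0 (y - \<mu> *\<^sub>C x)" by (simp add: xy(1) gft_diff gft_scale fun_diff_def)
  finally have "g = gft V \<phi>0 (y - \<mu> *\<^sub>C x)" .
  moreover have "g \<mu> = 0" by (simp add: g Mz_def)
  ultimately show "g \<in> {f \<in> WH V \<phi>0. f \<mu> = 0}" by (simp add: WH_def)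
next
  fix g assume "g \<in> {f \<in> WH V \<phi>0. f \<mu> = 0}"
  hence gW: "g \<in> WH V \<phi>0" and g0: "g \<mu> = 0" by auto
  define y where "y = inv_into UNIV (gft V \<phi>0) g"
  have gy: "g = gft V \<phi>0 y" using gW WH_gft by (simp add: y_def)
  define \<nu> where "\<nu> = cnj \<mu>"
  obtain S where S: "bounded_clinear_op S" "\<forall>w. S w - \<nu> *\<^sub>C V (S w) = w" using inv_IV by blast
  define B where "B w = V (S w)" for w
  have Bb: "bounded_clinear_op B"
  proof -
    obtain KS where KS: "KS > 0" "\<forall>x. norm (S x) \<le> KS * norm x" using bop_bound[OF S(1)] by blast
    obtain KV where KV: "KV > 0" "\<forall>x. norm (V x) \<le> KV * norm x" using bop_bound[OF Vb] by blast
    have "norm (B x) \<le> (KV * KS) * norm x" for x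
    proof -
      have "norm (B x) \<le> KV * norm (S x)" using KV by (simp add: B_def)
      also have "\<dots> \<le> KV * (KS * norm x)" using KS KV by (intro mult_left_mono) auto
      finally show ?thesis by (simp add: mult.assoc)
    qed
    moreover have "clinear_on UNIV B" unfolding clinear_on_def csubspace_def B_def
      by (simp add: bop_add[OF S(1)] bop_add[OF Vb] bop_scale[OF S(1)] bop_scale[OF Vb])
    ultimately show ?thesis unfolding bounded_clinear_op_def by blast
  qed
  have Bdom: "B w \<in> domD" for w by (simp add: B_def Vdom)
  have BD: "D (B w) - \<nu> *\<^sub>C B w = w" for w using S(2) by (simp add: B_def DV)
  define x where "x = adj UNIV B y"
  have Bx: "cinner (B w) y = cinner w x" for w unfolding x_def by (rule adj_prop[OF Bb])
  have py: "cinner (phi V \<phi>0 \<nu>) y = 0"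
  proof -
    have "cinner y (phi V \<phi>0 \<nu>) = 0" using g0 by (simp add: gy gft_def \<nu>_def)
    thus ?thesis by (subst cinner_commute) simp
  qed
  have wit: "\<forall>w\<in>domD. cinner (D w) x = cinner w (y + \<mu> *\<^sub>C x)"
  proof
    fix w assume wd: "w \<in> domD"
    define t where "t = D w - \<nu> *\<^sub>C w"
    have nwd: "\<nu> *\<^sub>C w \<in> domD" using domD_sub wd by (rule csubspace_scale)
    define u where "u = B t - w"
    have ud: "u \<in> domD" unfolding u_def using csubspace_diff[OF domD_sub Bdom wd] .
    have "D u - \<nu> *\<^sub>C u = (D (B t) - \<nu> *\<^sub>C B t) - (D w - \<nu> *\<^sub>C w)"
      unfolding u_def by (simp add: Ddiff[OF Bdom wd] scaleC_diff_right algebra_simps)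
    also have "\<dots> = 0" by (simp add: BD t_def)
    finally have "D u = \<nu> *\<^sub>C u" by simp
    then obtain k where k: "u = k *\<^sub>C phi V \<phi>0 \<nu>" using ker_char[OF ud] by blast
    have Bt: "B t = w + k *\<^sub>C phi V \<phi>0 \<nu>" using k by (simp add: u_def algebra_simps)
    have "cinner t x = cinner (B t) y" by (simp add: Bx)
    also have "\<dots> = cinner w y" using py by (simp add: Bt cinner_add_left cinner_scaleC_left)
    finally have tx: "cinner t x = cinner w y" .
    have "cinner (D w) x = cinner t x + \<nu> * cinner w x" by (simp add: t_def cinner_diff_left cinner_scaleC_left)
    also have "\<dots> = cinner w (y + \<mu> *\<^sub>C x)" by (simp add: tx cinner_add_right cinner_scaleC_right \<nu>_def)
    finally show "cinner (D w) x = cinner w (y + \<mu> *\<^sub>C x)" .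
  qed
  hence xD: "x \<in> adj_dom domD D" by (auto simp: adj_dom_def)
  have ax: "adj domD D x = y + \<mu> *\<^sub>C x" by (rule adj_eqI[OF domD_dense wit])
  have p2: "gft V \<phi>0 x \<in> Mz_dom V \<phi>0" "gft V \<phi>0 (adj domD D x) = Mz (gft V \<phi>0 x)" using part2[OF xD] by auto
  have "Mz (gft V \<phi>0 x) - (\<lambda>z. \<mu> * gft V \<phi>0 x z) = g"
  proof (rule ext)
    fix z
    have "Mz (gft V \<phi>0 x) z = gft V \<phi>0 (y + \<mu> *\<^sub>C x) z" using p2(2) ax by simp
    thus "(Mz (gft V \<phi>0 x) - (\<lambda>z. \<mu> * gft V \<phi>0 x z)) z = g z"
      by (simp add: gy gft_add gft_scale)
  qed
  thus "g \<in> (\<lambda>f. Mz f - (\<lambda>z. \<mu> * f z)) ` Mz_dom V \<phi>0" using p2(1) by (auto intro: image_eqI[of _ _ "gft V \<phi>0 x"])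
qed

end

theorem proposition4p1:
  fixes domD :: "'h::chilbert set" and D V :: "'h \<Rightarrow> 'h" and \<phi>0 :: 'h
  assumes sep: "separable_space TYPE('h)"
    and adm: "admissible domD D V"
    and phi0: "\<phi>0 \<in> domD" "D \<phi>0 = 0" "\<phi>0 \<noteq> 0"
  shows "(\<forall>x. gft V \<phi>0 (adj UNIV V x) = backward_shift (gft V \<phi>0 x)) \<and>
         (\<forall>x \<in> adj_dom domD D.
           gft V \<phi>0 x \<in> Mz_dom V \<phi>0 \<and> gft V \<phi>0 (adj domD D x) = Mz (gft V \<phi>0 x)) \<and>
         op_closed (WH_inner V \<phi>0) (WH V \<phi>0) (Mz_dom V \<phi>0) Mz \<and>
         op_symmetric (WH_inner V \<phi>0) (WH V \<phi>0) (Mz_dom V \<phi>0) Mz \<and>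
         (\<forall>\<mu>. (\<lambda>f. Mz f - (\<lambda>z. \<mu> * f z)) ` Mz_dom V \<phi>0 = {f \<in> WH V \<phi>0. f \<mu> = 0})"
proof -
  interpret adm domD D V \<phi>0 using adm phi0 by (unfold_locales) auto
  show ?thesis using part1 part2 part3 part4 part5 by blast
qed

end
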